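(* With the notation of the context, let $r\ge1$, let $T^{(r)}$ be any unitary on $\mathcal H$ with $T^{(r)}(|j\rangle\otimes|0\rangle^{\otimes(2r+1)})=|\Psi^{(r)}_j\rangle$ for all $j\in[N]$ (here $|j\rangle,|0\rangle\in\mathbb C^{2N}$), let $\epsilon\ge0$ and let $\tilde T$ be a unitary with $\|\tilde T-T^{(r)}\|\le\epsilon/2$. Let $\Pi:\mathbb C^N\to\mathcal H$ be the isometry $\Pi|j\rangle=|j\rangle\otimes|0\rangle^{\otimes(2r+1)}$. Then $\big\|\Pi^\dagger\tilde T^\dagger S^{(r)}\tilde T\,\Pi-(H/d)^r\big\|\le\epsilon$; that is, $\tilde T^\dagger S^{(r)}\tilde T$ is a $(1,2rn+2r+n+2,\epsilon)$-block-encoding of $(H/d)^r$ (with $\epsilon=0$ for $\tilde T=T^{(r)}$).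
   Context: Let $N=2^n$, $[m]=\{0,\dots,m-1\}$, and $H$ an $N\times N$ Hermitian matrix with $\|H\|_{\max}=\max_{j,k}|H_{jk}|\le1$. For each $j\in[N]$ let $N(j)\subseteq[N]$ with $|N(j)|=d$, $\{k:H_{jk}\ne0\}\subseteq N(j)$, and $k\in N(j)\iff j\in N(k)$. A path of length $r$ from $j_0$ is $\mathbf j=(j_0,\dots,j_r)\in[N]^{r+1}$ with $j_{s+1}\in N(j_s)$ for all $s\in[r]$. Fix complex numbers $\sigma_{jk}$ with $|\sigma_{jk}|^2=|H_{jk}|$ and $\sigma_{jk}\overline{\sigma_{kj}}=\overline{H_{jk}}$ for all $j,k\in[N]$. $\mathcal H=(\mathbb C^{2N})^{\otimes(2r+2)}$ with basis $|a_0,\dots,a_{2r+1}\rangle$, $a_i\in[2N]$, and $$|\Psi^{(r)}_{j_0}\rangle=\frac1{\sqrt{d^r}}\sum_{\mathbf j}|j_0,\dots,j_r\rangle\otimes|j_0\rangle\bigotimes_{s\in[r]}\Big(\sigma_{j_sj_{s+1}}|j_{s+1}\rangle+\sqrt{1-|H_{j_sj_{s+1}}|}\,|j_{s+1}+N\rangle\Big)$$ (sum over paths of length $r$ from $j_0$); this is a unit vector. $S^{(r)}|a_0,\dots,a_{2r+1}\rangle=|a_{2r+1},\dots,a_0\rangle$. Block-encoding: $U$ is an $(\alpha,a,\epsilon)$-block-encoding of $A$ if $\|A-\alpha(\text{compression of }U\text{ to ancillas in }|0\rangle)\|\le\epsilon$ in spectral norm. Norms are spectral norms. *)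

theory Defs
  imports "Jordan_Normal_Form.Schur_Decomposition"
begin

definition vec_norm2 :: "complex vec \<Rightarrow> real" where
  "vec_norm2 v = sqrt (\<Sum>i<dim_vec v. (cmod (v $ i))\<^sup>2)"

definition spec_norm :: "complex mat \<Rightarrow> real" where
  "spec_norm A = Sup {vec_norm2 (A *\<^sub>v v) | v. v \<in> carrier_vec (dim_col A) \<and> vec_norm2 v \<le> 1}"

definition hermitian_mat :: "complex mat \<Rightarrow> bool" where
  "hermitian_mat A \<longleftrightarrow> square_mat A \<and> mat_adjoint A = A"

definition unitary_mat :: "complex mat \<Rightarrow> bool" where
  "unitary_mat U \<longleftrightarrow> square_mat U \<and> mat_adjoint U * U = 1\<^sub>m (dim_row U)
                      \<and> U * mat_adjoint U = 1\<^sub>m (dim_row U)"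

text \<open>Basis states of m registers of dimension b are encoded big-endian:
  the index k corresponds to the digit list digits b m k = [a_0, ..., a_{m-1}],
  with a_0 the most significant digit.\<close>
fun digits :: "nat \<Rightarrow> nat \<Rightarrow> nat \<Rightarrow> nat list" where
  "digits b 0 k = []"
| "digits b (Suc m) k = (k div b ^ m) mod b # digits b m k"

definition tensor_list :: "nat \<Rightarrow> complex vec list \<Rightarrow> complex vec" where
  "tensor_list b vs = vec (b ^ length vs)
     (\<lambda>k. prod_list (map2 (\<lambda>v a. v $ a) vs (digits b (length vs) k)))"

definition paths :: "nat \<Rightarrow> (nat \<Rightarrow> nat set) \<Rightarrow> nat \<Rightarrow> nat \<Rightarrow> nat list set" where
  "paths N Nb r j0 = {p. length p = Suc r \<and> p ! 0 = j0 \<and> (\<forall>i\<in>set p. i < N)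
                        \<and> (\<forall>s<r. p ! Suc s \<in> Nb (p ! s))}"

definition Psi :: "nat \<Rightarrow> complex mat \<Rightarrow> (nat \<Rightarrow> nat set) \<Rightarrow> nat \<Rightarrow> (nat \<Rightarrow> nat \<Rightarrow> complex)
                   \<Rightarrow> nat \<Rightarrow> nat \<Rightarrow> complex vec" where
  "Psi N H Nb d \<sigma> r j0 =
     (let b = 2 * N;
          term = (\<lambda>p. tensor_list b
             (map (\<lambda>i. unit_vec b i) p @ [unit_vec b j0] @
              map (\<lambda>s. \<sigma> (p ! s) (p ! Suc s) \<cdot>\<^sub>v unit_vec b (p ! Suc s)
                       + complex_of_real (sqrt (1 - cmod (H $$ (p ! s, p ! Suc s))))
                         \<cdot>\<^sub>v unit_vec b (p ! Suc s + N)) [0..<r]))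
      in vec (b ^ (2 * r + 2))
           (\<lambda>k. complex_of_real (1 / sqrt (real d ^ r)) * (\<Sum>p\<in>paths N Nb r j0. term p $ k)))"

definition Swap :: "nat \<Rightarrow> nat \<Rightarrow> complex mat" where
  "Swap N r = (let b = 2 * N; m = 2 * r + 2 in
     mat (b ^ m) (b ^ m) (\<lambda>(i, k). if digits b m i = rev (digits b m k) then 1 else 0))"

definition padded :: "nat \<Rightarrow> nat \<Rightarrow> nat \<Rightarrow> complex vec" where
  "padded N r j = tensor_list (2 * N) (unit_vec (2 * N) j # replicate (2 * r + 1) (unit_vec (2 * N) 0))"

definition Pi_iso :: "nat \<Rightarrow> nat \<Rightarrow> complex mat" where
  "Pi_iso N r = mat_of_cols ((2 * N) ^ (2 * r + 2)) (map (padded N r) [0..<N])"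

end

theory Submission
  imports Defs "HOL-Analysis.L2_Norm"
begin


lemma adj_eq: "mat_adjoint (A::complex mat) = mat (dim_col A) (dim_row A) (\<lambda>(i,j). cnj (A$$(j,i)))"
  unfolding mat_adjoint_def by (auto simp: mat_of_rows_def)

lemma adj_carrier[simp]: "A \<in> carrier_mat n m \<Longrightarrow> mat_adjoint (A::complex mat) \<in> carrier_mat m n"
  by (simp add: adj_eq)

lemma adj_index[simp]: "i < dim_col A \<Longrightarrow> j < dim_row A \<Longrightarrow> mat_adjoint (A::complex mat) $$ (i,j) = cnj (A$$(j,i))"
  by (simp add: adj_eq)
lemma adj_dims[simp]: "dim_row (mat_adjoint (A::complex mat)) = dim_col A" "dim_col (mat_adjoint (A::complex mat)) = dim_row A"
  by (simp_all add: adj_eq)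

definition ip :: "complex vec \<Rightarrow> complex vec \<Rightarrow> complex" where
  "ip x y = (\<Sum>i<dim_vec x. cnj (x$i) * y$i)"

lemma norm2_L2: "vec_norm2 v = L2_set (\<lambda>i. cmod (v$i)) {..<dim_vec v}"
  unfolding vec_norm2_def L2_set_def by simp

lemma norm2_nonneg: "vec_norm2 v \<ge> 0"
  unfolding vec_norm2_def by (simp add: sum_nonneg)

lemma cnj_mult_self: "cnj z * z = complex_of_real ((cmod z)^2)"
  by (metis complex_norm_square mult.commute of_real_power)

lemma ip_self: "ip x x = complex_of_real ((vec_norm2 x)^2)"
proof -
  have "ip x x = (\<Sum>i<dim_vec x. complex_of_real ((cmod (x$i))^2))"
    unfolding ip_def by (intro sum.cong refl) (simp only: cnj_mult_self)
  also have "\<dots> = complex_of_real (\<Sum>i<dim_vec x. (cmod (x$i))^2)" by simp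
  finally show ?thesis unfolding vec_norm2_def by (simp add: sum_nonneg)
qed

lemma ip_cs: assumes "dim_vec y = dim_vec x" shows "cmod (ip x y) \<le> vec_norm2 x * vec_norm2 y"
proof -
  have "cmod (ip x y) \<le> (\<Sum>i<dim_vec x. cmod (cnj (x$i) * y$i))"
    unfolding ip_def by (rule norm_sum)
  also have "\<dots> = (\<Sum>i<dim_vec x. \<bar>cmod (x$i)\<bar> * \<bar>cmod (y$i)\<bar>)" by (simp add: norm_mult)
  also have "\<dots> \<le> L2_set (\<lambda>i. cmod (x$i)) {..<dim_vec x} * L2_set (\<lambda>i. cmod (y$i)) {..<dim_vec x}"
    by (rule L2_set_mult_ineq)
  finally show ?thesis using assms by (simp add: norm2_L2)
qed

lemma norm2_add: assumes "dim_vec y = dim_vec x" shows "vec_norm2 (x + y) \<le> vec_norm2 x + vec_norm2 y"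
proof -
  have "vec_norm2 (x + y) = L2_set (\<lambda>i. cmod (x$i + y$i)) {..<dim_vec x}"
    unfolding norm2_L2 using assms by (intro L2_set_cong) auto
  also have "\<dots> \<le> L2_set (\<lambda>i. cmod (x$i) + cmod (y$i)) {..<dim_vec x}"
    by (intro L2_set_mono) (auto simp: norm_triangle_ineq)
  also have "\<dots> \<le> vec_norm2 x + vec_norm2 y"
    unfolding norm2_L2 using assms by (metis L2_set_triangle_ineq)
  finally show ?thesis .
qed

lemma norm2_smult: "vec_norm2 (c \<cdot>\<^sub>v x) = cmod c * vec_norm2 x"
proof -
  have "vec_norm2 (c \<cdot>\<^sub>v x) = L2_set (\<lambda>i. cmod c * cmod (x$i)) {..<dim_vec x}"
    unfolding norm2_L2 by (intro L2_set_cong) (auto simp: norm_mult)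
  also have "\<dots> = cmod c * vec_norm2 x" unfolding norm2_L2 by (simp add: L2_set_right_distrib)
  finally show ?thesis .
qed

lemma norm2_zero: assumes "vec_norm2 x = 0" shows "x = 0\<^sub>v (dim_vec x)"
proof -
  have "\<forall>i\<in>{..<dim_vec x}. cmod (x$i) = 0" using assms unfolding norm2_L2
    by (subst (asm) L2_set_eq_0_iff) auto
  thus ?thesis by (intro eq_vecI) auto
qed

lemma norm2_minus_comm: assumes "dim_vec y = dim_vec x" shows "vec_norm2 (x - y) = vec_norm2 (y - x)"
  unfolding norm2_L2 using assms by (intro L2_set_cong) (auto simp: norm_minus_commute)

lemma ip_adj: assumes A: "A \<in> carrier_mat n m" and x: "x \<in> carrier_vec m" and y: "y \<in> carrier_vec n"
  shows "ip (A *\<^sub>v x) y = ip x (mat_adjoint A *\<^sub>v y)"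
proof -
  have "ip (A *\<^sub>v x) y = (\<Sum>i<n. cnj (\<Sum>k<m. A$$(i,k) * x$k) * y$i)"
    unfolding ip_def using A x y by (intro sum.cong) (auto simp: scalar_prod_def row_def atLeast0LessThan)
  also have "\<dots> = (\<Sum>i<n. \<Sum>k<m. cnj (A$$(i,k)) * cnj (x$k) * y$i)"
    by (simp add: sum_distrib_right mult.assoc)
  also have "\<dots> = (\<Sum>k<m. \<Sum>i<n. cnj (A$$(i,k)) * cnj (x$k) * y$i)"
    by (rule sum.swap)
  also have "\<dots> = (\<Sum>k<m. cnj (x$k) * (\<Sum>i<n. cnj (A$$(i,k)) * y$i))"
    by (simp add: sum_distrib_left mult.commute mult.left_commute)
  also have "\<dots> = ip x (mat_adjoint A *\<^sub>v y)"
    unfolding ip_def using A x y by (intro sum.cong) (auto simp: scalar_prod_def row_def atLeast0LessThan)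
  finally show ?thesis .
qed

lemma crude_bound: "\<exists>K\<ge>0. \<forall>v\<in>carrier_vec (dim_col A). vec_norm2 ((A::complex mat) *\<^sub>v v) \<le> K * vec_norm2 v"
proof (intro exI[of _ "\<Sum>i<dim_row A. \<Sum>k<dim_col A. cmod (A$$(i,k))"] conjI ballI)
  show "0 \<le> (\<Sum>i<dim_row A. \<Sum>k<dim_col A. cmod (A$$(i,k)))" by (simp add: sum_nonneg)
  fix v :: "complex vec" assume v: "v \<in> carrier_vec (dim_col A)"
  have ent: "cmod ((A *\<^sub>v v) $ i) \<le> (\<Sum>k<dim_col A. cmod (A$$(i,k))) * vec_norm2 v" if i: "i < dim_row A" for i
  proof -
    have "cmod ((A *\<^sub>v v) $ i) = cmod (\<Sum>k<dim_col A. A$$(i,k) * v$k)"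
      using i v by (auto simp: scalar_prod_def row_def atLeast0LessThan)
    also have "\<dots> \<le> (\<Sum>k<dim_col A. cmod (A$$(i,k) * v$k))" by (rule norm_sum)
    also have "\<dots> \<le> (\<Sum>k<dim_col A. cmod (A$$(i,k)) * vec_norm2 v)"
    proof (intro sum_mono)
      fix k assume k: "k \<in> {..<dim_col A}"
      have "cmod (v$k) \<le> vec_norm2 v" unfolding norm2_L2
        using v k by (intro member_le_L2_set) auto
      thus "cmod (A$$(i,k) * v$k) \<le> cmod (A$$(i,k)) * vec_norm2 v"
        by (simp add: norm_mult mult_left_mono)
    qed
    also have "\<dots> = (\<Sum>k<dim_col A. cmod (A$$(i,k))) * vec_norm2 v" by (simp add: sum_distrib_right)
    finally show ?thesis .
  qed
  have "vec_norm2 (A *\<^sub>v v) \<le> (\<Sum>i<dim_row A. \<bar>cmod ((A *\<^sub>v v) $ i)\<bar>)"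
    unfolding norm2_L2 dim_mult_mat_vec by (rule L2_set_le_sum_abs)
  also have "\<dots> \<le> (\<Sum>i<dim_row A. (\<Sum>k<dim_col A. cmod (A$$(i,k))) * vec_norm2 v)"
    using ent by (intro sum_mono) auto
  also have "\<dots> = (\<Sum>i<dim_row A. \<Sum>k<dim_col A. cmod (A$$(i,k))) * vec_norm2 v"
    by (simp add: sum_distrib_right)
  finally show "vec_norm2 (A *\<^sub>v v) \<le> (\<Sum>i<dim_row A. \<Sum>k<dim_col A. cmod (A$$(i,k))) * vec_norm2 v" .
qed

lemma spec_bdd: "bdd_above {vec_norm2 ((A::complex mat) *\<^sub>v v) | v. v \<in> carrier_vec (dim_col A) \<and> vec_norm2 v \<le> 1}"
proof -
  obtain K where K: "K \<ge> 0" "\<forall>v\<in>carrier_vec (dim_col A). vec_norm2 (A *\<^sub>v v) \<le> K * vec_norm2 v"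
    using crude_bound by blast
  show ?thesis
  proof (rule bdd_aboveI[of _ K], clarify)
    fix v :: "complex vec" assume v: "v \<in> carrier_vec (dim_col A)" "vec_norm2 v \<le> 1"
    have "vec_norm2 (A *\<^sub>v v) \<le> K * vec_norm2 v" using K v by blast
    also have "\<dots> \<le> K" using K v by (simp add: mult_left_le)
    finally show "vec_norm2 (A *\<^sub>v v) \<le> K" .
  qed
qed

lemma spec_norm_bound: assumes v: "v \<in> carrier_vec (dim_col A)"
  shows "vec_norm2 ((A::complex mat) *\<^sub>v v) \<le> spec_norm A * vec_norm2 v"
proof (cases "vec_norm2 v = 0")
  case True
  then have "v = 0\<^sub>v (dim_col A)" using norm2_zero v by fastforce
  then have "A *\<^sub>v v = 0\<^sub>v (dim_row A)" by auto
  then have "vec_norm2 (A *\<^sub>v v) = 0" by (simp add: vec_norm2_def)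
  then show ?thesis using True by simp
next
  case False
  define c where "c = vec_norm2 v"
  have c: "c > 0" using False norm2_nonneg c_def by (metis less_eq_real_def)
  define w where "w = complex_of_real (1/c) \<cdot>\<^sub>v v"
  have w: "w \<in> carrier_vec (dim_col A)" "vec_norm2 w \<le> 1"
    using v c unfolding w_def by (auto simp: norm2_smult c_def norm_divide)
  have "vec_norm2 (A *\<^sub>v w) \<le> spec_norm A"
    unfolding spec_norm_def using w by (intro cSup_upper spec_bdd) blast
  moreover have "A *\<^sub>v w = complex_of_real (1/c) \<cdot>\<^sub>v (A *\<^sub>v v)"
    unfolding w_def using v by (metis carrier_mat_triv mult_mat_vec)
  ultimately have "(1/c) * vec_norm2 (A *\<^sub>v v) \<le> spec_norm A" using c
    by (simp add: norm2_smult norm_divide)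
  then show ?thesis using c unfolding c_def by (simp add: field_simps)
qed

lemma spec_norm_le: assumes "c \<ge> 0" and "\<And>v. v \<in> carrier_vec (dim_col A) \<Longrightarrow> vec_norm2 ((A::complex mat) *\<^sub>v v) \<le> c * vec_norm2 v"
  shows "spec_norm A \<le> c"
  unfolding spec_norm_def
proof (rule cSup_least)
  show "{vec_norm2 (A *\<^sub>v v) |v. v \<in> carrier_vec (dim_col A) \<and> vec_norm2 v \<le> 1} \<noteq> {}"
  proof -
    have "0\<^sub>v (dim_col A) \<in> carrier_vec (dim_col A) \<and> vec_norm2 (0\<^sub>v (dim_col A) :: complex vec) \<le> 1" by (simp add: vec_norm2_def)
    thus ?thesis by blast
  qed
next
  fix x assume "x \<in> {vec_norm2 (A *\<^sub>v v) |v. v \<in> carrier_vec (dim_col A) \<and> vec_norm2 v \<le> 1}"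
  then obtain v where v: "v \<in> carrier_vec (dim_col A)" "vec_norm2 v \<le> 1" "x = vec_norm2 (A *\<^sub>v v)" by blast
  have "x \<le> c * vec_norm2 v" using assms v by simp
  also have "\<dots> \<le> c" using assms(1) v by (simp add: mult_left_le)
  finally show "x \<le> c" .
qed

lemma adj_bound: assumes A: "A \<in> carrier_mat n m" and c: "c \<ge> 0"
  and B: "\<And>v. v \<in> carrier_vec m \<Longrightarrow> vec_norm2 ((A::complex mat) *\<^sub>v v) \<le> c * vec_norm2 v"
  and w: "w \<in> carrier_vec n"
  shows "vec_norm2 (mat_adjoint A *\<^sub>v w) \<le> c * vec_norm2 w"
proof -
  define x where "x = mat_adjoint A *\<^sub>v w"
  define X where "X = vec_norm2 x"
  define W where "W = vec_norm2 w"
  have X0: "X \<ge> 0" and W0: "W \<ge> 0" unfolding X_def W_def by (rule norm2_nonneg)+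
  have x: "x \<in> carrier_vec m" unfolding x_def by (rule mult_mat_vec_carrier[OF adj_carrier[OF A] w])
  have i1: "complex_of_real (X^2) = ip x x" unfolding X_def by (rule ip_self[symmetric])
  have xx: "mat_adjoint A *\<^sub>v w = x" by (simp add: x_def)
  have i2: "ip (A *\<^sub>v x) w = ip x x" using ip_adj[OF A x w] unfolding xx .
  have "cmod (complex_of_real (X^2)) = cmod (ip (A *\<^sub>v x) w)" unfolding i1 i2 ..
  then have e: "X^2 = cmod (ip (A *\<^sub>v x) w)" by (simp only: norm_of_real abs_power2)
  have d: "dim_vec w = dim_vec (A *\<^sub>v x)" using A w by auto
  have "cmod (ip (A *\<^sub>v x) w) \<le> vec_norm2 (A *\<^sub>v x) * W" unfolding W_def by (rule ip_cs[OF d])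
  also have "\<dots> \<le> (c * X) * W" unfolding X_def using B[OF x] W0 by (simp add: mult_right_mono)
  finally have *: "X * X \<le> (c * W) * X" using e by (simp add: power2_eq_square mult_ac)
  show ?thesis
  proof (cases "X = 0")
    case True then show ?thesis using c W0 unfolding X_def x_def W_def by simp
  next
    case False
    then have "X > 0" using X0 by linarith
    then have "X \<le> c * W" using * by (simp add: mult_right_le_imp_le)
    then show ?thesis unfolding X_def x_def W_def .
  qed
qed

lemma iso_norm: assumes A: "A \<in> carrier_mat n m" and I: "mat_adjoint A * A = 1\<^sub>m m"
  and v: "v \<in> carrier_vec m"
  shows "vec_norm2 ((A::complex mat) *\<^sub>v v) = vec_norm2 v"
proof -
  have "complex_of_real ((vec_norm2 (A *\<^sub>v v))^2) = ip (A *\<^sub>v v) (A *\<^sub>v v)" by (simp add: ip_self)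
  also have "\<dots> = ip v (mat_adjoint A *\<^sub>v (A *\<^sub>v v))" using A v by (intro ip_adj) auto
  also have "mat_adjoint A *\<^sub>v (A *\<^sub>v v) = (mat_adjoint A * A) *\<^sub>v v"
    by (rule assoc_mult_mat_vec[symmetric, OF adj_carrier[OF A] A v])
  also have "\<dots> = v" using I v by simp
  finally have "complex_of_real ((vec_norm2 (A *\<^sub>v v))^2) = complex_of_real ((vec_norm2 v)^2)" by (simp only: ip_self)
  then have "(vec_norm2 (A *\<^sub>v v))^2 = (vec_norm2 v)^2" using of_real_eq_iff by blast
  thus ?thesis using norm2_nonneg by (metis power2_eq_iff_nonneg)
qed



lemma divmod_aux: "x < (B::nat) \<Longrightarrow> (a*B + x) div B = a" "x < (B::nat) \<Longrightarrow> (a*B + x) mod B = x"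
  by simp_all


fun from_digits :: "nat \<Rightarrow> nat list \<Rightarrow> nat" where
  "from_digits b [] = 0"
| "from_digits b (a # ds) = a * b ^ length ds + from_digits b ds"

lemma length_digits[simp]: "length (digits b m k) = m"
  by (induction m) auto

lemma digits_lt: "b > 0 \<Longrightarrow> x \<in> set (digits b m k) \<Longrightarrow> x < b"
  by (induction m) auto

lemma mod_div_aux: "(k mod (B*C)) div B = (k div B) mod (C::nat)"
  by (metis add.right_neutral div_mult_self4 mod_by_0 mod_div_trivial
    mod_mult2_eq mod_mult_self2_is_0)

lemma digits_mod1: "t < m \<Longrightarrow> (k div b ^ t) mod (b::nat) = ((k mod b ^ m) div b ^ t) mod b"
proof -
  assume t: "t < m"
  have "b ^ m = b ^ (t + (m - t))" using t by simp
  also have "\<dots> = b ^ t * b ^ (m - t)" by (rule power_add)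
  finally have e: "b ^ m = b ^ t * b ^ (m - t)" .
  have 1: "(k mod b ^ m) div b ^ t = (k div b ^ t) mod b ^ (m - t)"
    unfolding e by (rule mod_div_aux)
  have d: "b dvd b ^ (m - t)" using t by (intro dvd_power) auto
  show ?thesis unfolding 1 by (rule mod_mod_cancel[OF d, symmetric])
qed

lemma digits_mod: "digits b m k = digits b m (k mod b ^ m)"
proof -
  have "\<forall>M\<ge>m. digits b m k = digits b m (k mod b ^ M)"
  proof (induction m)
    case 0 then show ?case by simp
  next
    case (Suc m)
    show ?case
    proof (intro allI impI)
      fix M assume M: "Suc m \<le> M"
      have "digits b m k = digits b m (k mod b ^ M)" using Suc M by simp
      moreover have "(k div b ^ m) mod b = ((k mod b ^ M) div b ^ m) mod b"
        using M by (intro digits_mod1) simp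
      ultimately show "digits b (Suc m) k = digits b (Suc m) (k mod b ^ M)"
        by (simp only: digits.simps)
    qed
  qed
  thus ?thesis by blast
qed

lemma from_digits_lt: "(\<forall>x\<in>set ds. x < b) \<Longrightarrow> from_digits b ds < b ^ length ds"
proof (induction ds)
  case Nil then show ?case by simp
next
  case (Cons a ds)
  have "a * b ^ length ds + from_digits b ds < a * b ^ length ds + b ^ length ds"
    using Cons by simp
  also have "\<dots> = (a + 1) * b ^ length ds" by (simp add: algebra_simps)
  also have "\<dots> \<le> b * b ^ length ds" using Cons by (intro mult_right_mono) auto
  finally show ?case by simp
qed

lemma digits_from: "(\<forall>x\<in>set ds. x < b) \<Longrightarrow> digits b (length ds) (from_digits b ds) = ds"
proof (induction ds)
  case Nil then show ?case by simp
next
  case (Cons a ds)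
  have lt: "from_digits b ds < b ^ length ds" using Cons by (intro from_digits_lt) auto
  have "(a * b ^ length ds + from_digits b ds) div b ^ length ds = a"
    using lt by (rule divmod_aux)
  moreover have "(a * b ^ length ds + from_digits b ds) mod b ^ length ds = from_digits b ds"
    using lt by (rule divmod_aux)
  moreover have "a mod b = a" using Cons by simp
  moreover have "digits b (length ds) (from_digits b ds) = ds" using Cons by simp
  ultimately show ?case using digits_mod[of b "length ds" "a * b ^ length ds + from_digits b ds"]
    by (simp only: length_Cons digits.simps from_digits.simps)
qed

lemma from_digits_digits: "k < b ^ m \<Longrightarrow> from_digits b (digits b m k) = k"
proof (induction m arbitrary: k)
  case 0 then show ?case by simp
next
  case (Suc m)
  have "k div b ^ m < b" using Suc.prems by (metis less_mult_imp_div_less power_Suc2 mult.commute)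
  then have "from_digits b (digits b (Suc m) k) = (k div b ^ m) * b ^ m + from_digits b (digits b m (k mod b ^ m))"
    by (simp add: digits_mod[of b m k, symmetric])
  also have "\<dots> = (k div b ^ m) * b ^ m + k mod b ^ m"
    using Suc.IH[of "k mod b ^ m"] Suc.prems by (cases "b = 0") auto
  also have "\<dots> = k" by (rule div_mult_mod_eq)
  finally show ?case .
qed

definition LS :: "nat \<Rightarrow> nat \<Rightarrow> nat list set" where
  "LS b m = {ds. length ds = m \<and> (\<forall>x\<in>set ds. x < b)}"

lemma finite_LS: "finite (LS b m)"
proof -
  have "LS b m \<subseteq> {ds. set ds \<subseteq> {..<b} \<and> length ds = m}" unfolding LS_def by auto
  thus ?thesis using finite_lists_length_eq[of "{..<b}" m] by (metis finite_subset finite_lessThan)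
qed

lemma bij_digits: "b > 0 \<Longrightarrow> bij_betw (digits b m) {..<b ^ m} (LS b m)"
proof (rule bij_betw_byWitness[where f' = "from_digits b"])
  assume b: "b > 0"
  show "\<forall>a\<in>{..<b ^ m}. from_digits b (digits b m a) = a" by (auto simp: from_digits_digits)
  show "\<forall>a'\<in>LS b m. digits b m (from_digits b a') = a'" unfolding LS_def using digits_from by auto
  show "digits b m ` {..<b ^ m} \<subseteq> LS b m" unfolding LS_def using digits_lt[OF b] by auto
  show "from_digits b ` LS b m \<subseteq> {..<b ^ m}" unfolding LS_def using from_digits_lt by fastforce
qed

lemma sum_digits: "b > 0 \<Longrightarrow> (\<Sum>k<b ^ m. F (digits b m k)) = (\<Sum>ds\<in>LS b m. F ds)"
  using sum.reindex_bij_betw[OF bij_digits] by metis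

lemma LS_Suc: "LS b (Suc m) = (\<lambda>(a, ds). a # ds) ` ({..<b} \<times> LS b m)"
proof
  show "LS b (Suc m) \<subseteq> (\<lambda>(a, ds). a # ds) ` ({..<b} \<times> LS b m)"
  proof
    fix xs assume "xs \<in> LS b (Suc m)"
    then obtain a ds where "xs = a # ds" "a < b" "ds \<in> LS b m" unfolding LS_def
      by (cases xs) auto
    thus "xs \<in> (\<lambda>(a, ds). a # ds) ` ({..<b} \<times> LS b m)" by force
  qed
  show "(\<lambda>(a, ds). a # ds) ` ({..<b} \<times> LS b m) \<subseteq> LS b (Suc m)" unfolding LS_def by auto
qed

lemma sum_LS_prod: fixes f :: "'v \<Rightarrow> nat \<Rightarrow> complex" shows "(\<Sum>ds\<in>LS b (length vs). prod_list (map2 f vs ds)) = prod_list (map (\<lambda>v. \<Sum>a<b. f v a) vs)"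
proof (induction vs)
  case Nil
  have "LS b 0 = {[]}" unfolding LS_def by auto
  then show ?case by simp
next
  case (Cons v vs)
  have inj: "inj_on (\<lambda>(a, ds). a # ds) ({..<b} \<times> LS b (length vs))" by (auto simp: inj_on_def)
  have "(\<Sum>ds\<in>LS b (length (v # vs)). prod_list (map2 f (v # vs) ds))
      = (\<Sum>(a, ds)\<in>{..<b} \<times> LS b (length vs). prod_list (map2 f (v # vs) (a # ds)))"
    unfolding length_Cons LS_Suc sum.reindex[OF inj] by (simp add: case_prod_beta comp_def)
  also have "\<dots> = (\<Sum>a<b. \<Sum>ds\<in>LS b (length vs). f v a * prod_list (map2 f vs ds))"
    by (simp add: sum.cartesian_product)
  also have "\<dots> = (\<Sum>a<b. f v a) * (\<Sum>ds\<in>LS b (length vs). prod_list (map2 f vs ds))"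
    by (rule sum_product[symmetric])
  finally show ?case using Cons by simp
qed



lemma dim_tensor[simp]: "dim_vec (tensor_list b vs) = b ^ length vs"
  unfolding tensor_list_def by simp

lemma tensor_index: "k < b ^ length vs \<Longrightarrow> tensor_list b vs $ k = prod_list (map2 (\<lambda>v a. v $ a) vs (digits b (length vs) k))"
  unfolding tensor_list_def by simp

lemma cnj_prod_zip: assumes "length us = length vs" "length vs = length ds" shows
  "cnj (prod_list (map2 (\<lambda>v a. v $ a) us ds)) * prod_list (map2 (\<lambda>v a. v $ a) vs ds)
  = prod_list (map2 (\<lambda>(u, v) a. cnj (u $ a) * v $ a) (zip us vs) ds)"
  using assms
proof (induction us vs ds rule: list_induct3)
  case Nil then show ?case by simp
next
  case (Cons u us v vs a ds)
  then show ?case by (simp add: mult_ac)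
qed

lemma ip_tensor: assumes b: "b > 0" and len: "length us = length vs"
  and du: "\<forall>u\<in>set us. dim_vec u = b"
  shows "ip (tensor_list b us) (tensor_list b vs) = prod_list (map2 ip us vs)"
proof -
  let ?m = "length us"
  have "ip (tensor_list b us) (tensor_list b vs) =
     (\<Sum>k<b ^ ?m. prod_list (map2 (\<lambda>(u, v) a. cnj (u $ a) * v $ a) (zip us vs) (digits b ?m k)))"
    unfolding ip_def using len by (intro sum.cong) (auto simp: tensor_index cnj_prod_zip)
  also have "\<dots> = (\<Sum>ds\<in>LS b (length (zip us vs)). prod_list (map2 (\<lambda>(u, v) a. cnj (u $ a) * v $ a) (zip us vs) ds))"
    using sum_digits[OF b] len by simp
  also have "\<dots> = prod_list (map (\<lambda>w. \<Sum>a<b. (case w of (u, v) \<Rightarrow> \<lambda>a. cnj (u $ a) * v $ a) a) (zip us vs))"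
    by (rule sum_LS_prod)
  also have "\<dots> = prod_list (map2 ip us vs)"
  proof -
    have "map (\<lambda>w. \<Sum>a<b. (case w of (u, v) \<Rightarrow> \<lambda>a. cnj (u $ a) * v $ a) a) (zip us vs)
        = map (\<lambda>(u, v). ip u v) (zip us vs)"
    proof (rule map_cong[OF refl])
      fix w assume "w \<in> set (zip us vs)"
      moreover obtain u v where w0: "w = (u, v)" by (cases w)
      ultimately have "(u, v) \<in> set (zip us vs)" by simp
      then have w: "w = (u, v)" "u \<in> set us" using w0 set_zip_leftD by fastforce+
      then show "(\<Sum>a<b. (case w of (u, v) \<Rightarrow> \<lambda>a. cnj (u $ a) * v $ a) a) = (case w of (u, v) \<Rightarrow> ip u v)"
        using du unfolding ip_def by simp
    qed
    then show ?thesis by (simp only:)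
  qed
  finally show ?thesis .
qed

lemma ip_unit_left: assumes "i < n" "dim_vec v = n" shows "ip (unit_vec n i) v = v $ i"
proof -
  have "ip (unit_vec n i) v = (\<Sum>j<n. if j = i then v $ i else 0)"
    unfolding ip_def using assms by (intro sum.cong) auto
  also have "\<dots> = v $ i" using assms by simp
  finally show ?thesis .
qed

lemma ip_unit_right: assumes "i < n" "dim_vec v = n" shows "ip v (unit_vec n i) = cnj (v $ i)"
proof -
  have "ip v (unit_vec n i) = (\<Sum>j<n. if j = i then cnj (v $ i) else 0)"
    unfolding ip_def using assms by (intro sum.cong) auto
  also have "\<dots> = cnj (v $ i)" using assms by simp
  finally show ?thesis .
qed

definition revidx :: "nat \<Rightarrow> nat \<Rightarrow> nat \<Rightarrow> nat" where
  "revidx b m i = from_digits b (rev (digits b m i))"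

lemma rev_digits_LS: "b > 0 \<Longrightarrow> rev (digits b m i) \<in> LS b m"
  unfolding LS_def using digits_lt by auto

lemma revidx_lt: "b > 0 \<Longrightarrow> revidx b m i < b ^ m"
  unfolding revidx_def using from_digits_lt[of "rev (digits b m i)" b] digits_lt by auto

lemma digits_revidx: "b > 0 \<Longrightarrow> digits b m (revidx b m i) = rev (digits b m i)"
  unfolding revidx_def using digits_from[of "rev (digits b m i)" b] digits_lt by auto

lemma revidx_revidx: "b > 0 \<Longrightarrow> i < b ^ m \<Longrightarrow> revidx b m (revidx b m i) = i"
  using digits_revidx[of b m i] unfolding revidx_def[of b m "revidx b m i"]
  by (simp add: from_digits_digits)

definition SW :: "nat \<Rightarrow> nat \<Rightarrow> complex mat" where
  "SW b m = mat (b ^ m) (b ^ m) (\<lambda>(i, k). if digits b m i = rev (digits b m k) then 1 else 0)"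

lemma Swap_SW: "Swap N r = SW (2*N) (2*r+2)"
  unfolding Swap_def SW_def Let_def ..

lemma SW_carrier: "SW b m \<in> carrier_mat (b ^ m) (b ^ m)"
  unfolding SW_def by simp

lemma SW_apply: assumes b: "b > 0" and x: "x \<in> carrier_vec (b ^ m)"
  shows "SW b m *\<^sub>v x = vec (b ^ m) (\<lambda>i. x $ revidx b m i)"
proof (rule eq_vecI)
  show "dim_vec (SW b m *\<^sub>v x) = dim_vec (vec (b ^ m) (\<lambda>i. x $ revidx b m i))"
    using SW_carrier[of b m] by simp
  fix i assume i: "i < dim_vec (vec (b ^ m) (\<lambda>i. x $ revidx b m i))"
  then have i: "i < b ^ m" by simp
  have "(SW b m *\<^sub>v x) $ i = (\<Sum>k<b ^ m. (if digits b m i = rev (digits b m k) then 1 else 0) * x $ k)"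
  proof -
    have "(SW b m *\<^sub>v x) $ i = row (SW b m) i \<bullet> x" using i SW_carrier[of b m] by simp
    also have "\<dots> = (\<Sum>k\<in>{0..<b ^ m}. row (SW b m) i $ k * x $ k)" unfolding scalar_prod_def using x by simp
    also have "\<dots> = (\<Sum>k<b ^ m. (if digits b m i = rev (digits b m k) then 1 else 0) * x $ k)"
      unfolding atLeast0LessThan
    proof (intro sum.cong refl)
      fix k assume k: "k \<in> {..<b ^ m}"
      have "row (SW b m) i $ k = SW b m $$ (i, k)" using i k SW_carrier[of b m] by (intro index_row) auto
      also have "\<dots> = (if digits b m i = rev (digits b m k) then 1 else 0)"
        unfolding SW_def using i k by (subst index_mat) auto
      finally show "row (SW b m) i $ k * x $ k = (if digits b m i = rev (digits b m k) then 1 else 0) * x $ k" by simp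
    qed
    finally show ?thesis .
  qed
  also have "\<dots> = (\<Sum>k<b ^ m. (\<lambda>ds. (if ds = rev (digits b m i) then 1 else 0) * x $ from_digits b ds) (digits b m k))"
  proof (intro sum.cong refl)
    fix k assume "k \<in> {..<b ^ m}"
    then have "from_digits b (digits b m k) = k" by (simp add: from_digits_digits)
    moreover have "(digits b m i = rev (digits b m k)) = (digits b m k = rev (digits b m i))" by auto
    ultimately show "(if digits b m i = rev (digits b m k) then 1 else 0) * x $ k =
      (\<lambda>ds. (if ds = rev (digits b m i) then 1 else 0) * x $ from_digits b ds) (digits b m k)" by simp
  qed
  also have "\<dots> = (\<Sum>ds\<in>LS b m. (if ds = rev (digits b m i) then 1 else 0) * x $ from_digits b ds)"
    by (rule sum_digits[OF b])
  also have "\<dots> = (\<Sum>ds\<in>LS b m. if ds = rev (digits b m i) then x $ from_digits b ds else 0)"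
    by (intro sum.cong) auto
  also have "\<dots> = x $ revidx b m i"
    using rev_digits_LS[OF b] finite_LS unfolding revidx_def by simp
  finally show "(SW b m *\<^sub>v x) $ i = vec (b ^ m) (\<lambda>i. x $ revidx b m i) $ i"
    using i by simp
qed

lemma prod_map2_rev: fixes f :: "'a \<Rightarrow> 'b \<Rightarrow> complex" assumes l: "length xs = length ys"
  shows "prod_list (map2 f xs (rev ys)) = prod_list (map2 f (rev xs) ys)"
proof -
  have "zip (rev xs) (rev (rev ys)) = rev (zip xs (rev ys))" using l by (intro zip_rev) simp
  then have "zip (rev xs) ys = rev (zip xs (rev ys))" by simp
  then have "map2 f (rev xs) ys = rev (map2 f xs (rev ys))" by (simp add: rev_map)
  then show ?thesis by (simp add: prod_list.rev)
qed

lemma SW_tensor: assumes b: "b > 0" and len: "length vs = m"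
  shows "SW b m *\<^sub>v tensor_list b vs = tensor_list b (rev vs)"
proof -
  have tc: "tensor_list b vs \<in> carrier_vec (b ^ m)" unfolding carrier_vec_def using len by simp
  have "SW b m *\<^sub>v tensor_list b vs = vec (b ^ m) (\<lambda>i. tensor_list b vs $ revidx b m i)"
    by (rule SW_apply[OF b tc])
  also have "\<dots> = tensor_list b (rev vs)"
  proof (rule eq_vecI)
    fix i assume "i < dim_vec (tensor_list b (rev vs))"
    then have i: "i < b ^ m" using len by simp
    have r: "revidx b m i < b ^ length vs" using revidx_lt[OF b] len by simp
    have d: "digits b (length vs) (revidx b m i) = rev (digits b m i)" using digits_revidx[OF b] len by simp
    have "tensor_list b vs $ revidx b m i = prod_list (map2 (\<lambda>v a. v $ a) vs (digits b (length vs) (revidx b m i)))"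
      by (rule tensor_index[OF r])
    also have "\<dots> = prod_list (map2 (\<lambda>v a. v $ a) vs (rev (digits b m i)))" unfolding d ..
    also have "\<dots> = prod_list (map2 (\<lambda>v a. v $ a) (rev vs) (digits b m i))"
      using len by (intro prod_map2_rev) simp
    also have "\<dots> = tensor_list b (rev vs) $ i"
    proof -
      have i': "i < b ^ length (rev vs)" using i len by simp
      show ?thesis unfolding tensor_index[OF i'] using len by simp
    qed
    finally show "vec (b ^ m) (\<lambda>i. tensor_list b vs $ revidx b m i) $ i = tensor_list b (rev vs) $ i"
      using i by simp
  qed (use len in simp)
  finally show ?thesis .
qed

lemma SW_norm: assumes b: "b > 0" and x: "x \<in> carrier_vec (b ^ m)"
  shows "vec_norm2 (SW b m *\<^sub>v x) = vec_norm2 x"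
proof -
  have bij: "bij_betw (revidx b m) {..<b ^ m} {..<b ^ m}"
    by (rule bij_betw_byWitness[where f' = "revidx b m"]) (auto simp: revidx_revidx[OF b] revidx_lt[OF b])
  have "(\<Sum>i<b ^ m. (cmod (x $ revidx b m i))^2) = (\<Sum>i<b ^ m. (cmod (x $ i))^2)"
    by (rule sum.reindex_bij_betw[OF bij])
  then show ?thesis unfolding vec_norm2_def SW_apply[OF b x] using x by simp
qed



lemma paths_finite: "finite (paths N Nb r k)"
proof -
  have "paths N Nb r k \<subseteq> {xs. set xs \<subseteq> {..<N} \<and> length xs = Suc r}" unfolding paths_def by auto
  thus ?thesis using finite_lists_length_eq[of "{..<N}" "Suc r"] by (metis finite_subset finite_lessThan)
qed

lemma paths_0: "k < N \<Longrightarrow> paths N Nb 0 k = {[k]}"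
proof
  assume k: "k < N"
  show "paths N Nb 0 k \<subseteq> {[k]}"
  proof
    fix p assume "p \<in> paths N Nb 0 k"
    then have "length p = 1" "p ! 0 = k" unfolding paths_def by auto
    then show "p \<in> {[k]}" by (cases p) auto
  qed
  show "{[k]} \<subseteq> paths N Nb 0 k" unfolding paths_def using k by auto
qed

lemma paths_Suc_end:
  assumes j: "j < N" and k: "k < N"
  shows "{p \<in> paths N Nb (Suc r) k. p ! Suc r = j} = (\<lambda>q. q @ [j]) ` {q \<in> paths N Nb r k. j \<in> Nb (q ! r)}"
proof
  show "(\<lambda>q. q @ [j]) ` {q \<in> paths N Nb r k. j \<in> Nb (q ! r)} \<subseteq> {p \<in> paths N Nb (Suc r) k. p ! Suc r = j}"
  proof clarify
    fix q assume q: "q \<in> paths N Nb r k" "j \<in> Nb (q ! r)"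
    then have l: "length q = Suc r" and q0: "q ! 0 = k" and qN: "\<forall>i\<in>set q. i < N"
      and qe: "\<forall>s<r. q ! Suc s \<in> Nb (q ! s)" unfolding paths_def by auto
    have "\<forall>s<Suc r. (q @ [j]) ! Suc s \<in> Nb ((q @ [j]) ! s)"
    proof (intro allI impI)
      fix s assume s: "s < Suc r"
      show "(q @ [j]) ! Suc s \<in> Nb ((q @ [j]) ! s)"
      proof (cases "s < r")
        case True then show ?thesis using qe l by (simp add: nth_append)
      next
        case False then have "s = r" using s by simp
        then show ?thesis using q(2) l by (simp add: nth_append)
      qed
    qed
    then show "q @ [j] \<in> paths N Nb (Suc r) k \<and> (q @ [j]) ! Suc r = j"
      unfolding paths_def using l q0 qN j by (auto simp: nth_append)
  qed
  show "{p \<in> paths N Nb (Suc r) k. p ! Suc r = j} \<subseteq> (\<lambda>q. q @ [j]) ` {q \<in> paths N Nb r k. j \<in> Nb (q ! r)}"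
  proof (rule subsetI)
    fix p assume "p \<in> {p \<in> paths N Nb (Suc r) k. p ! Suc r = j}"
    then have p: "p \<in> paths N Nb (Suc r) k" "p ! Suc r = j" by auto
    then have l: "length p = Suc (Suc r)" and p0: "p ! 0 = k" and pN: "\<forall>i\<in>set p. i < N"
      and pe: "\<forall>s<Suc r. p ! Suc s \<in> Nb (p ! s)" unfolding paths_def by auto
    define q where "q = butlast p"
    have lq: "length q = Suc r" using l unfolding q_def by simp
    have pq: "p = q @ [j]"
    proof -
      have "p = butlast p @ [last p]" using l by (metis append_butlast_last_id list.size(3) nat.distinct(1))
      moreover have "last p = j"
      proof -
        have "p \<noteq> []" using l by auto
        then have "last p = p ! (length p - 1)" by (rule last_conv_nth)
        then show ?thesis using p(2) l by simp
      qed
      ultimately show ?thesis unfolding q_def by simp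
    qed
    have qi: "\<And>i. i < Suc r \<Longrightarrow> q ! i = p ! i" unfolding pq using lq by (simp add: nth_append)
    have "q \<in> paths N Nb r k" unfolding paths_def
    proof (intro CollectI conjI)
      show "length q = Suc r" by (rule lq)
      show "q ! 0 = k" using qi[of 0] p0 by simp
      show "\<forall>i\<in>set q. i < N" using pN unfolding q_def by (meson in_set_butlastD)
      show "\<forall>s<r. q ! Suc s \<in> Nb (q ! s)" using pe qi by simp
    qed
    moreover have "j \<in> Nb (q ! r)" using pe[rule_format, of r] qi[of r] p(2) by simp
    ultimately show "p \<in> (\<lambda>q. q @ [j]) ` {q \<in> paths N Nb r k. j \<in> Nb (q ! r)}" using pq by blast
  qed
qed

lemma path_last_lt: "q \<in> paths N Nb r k \<Longrightarrow> q ! r < N"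
  unfolding paths_def by auto

lemma path_sum:
  assumes H: "H \<in> carrier_mat N N"
    and supp: "\<forall>j<N. {k. k < N \<and> H $$ (j, k) \<noteq> 0} \<subseteq> Nb j"
    and k: "k < N" and j: "j < N"
  shows "(H ^\<^sub>m r) $$ (k, j) = (\<Sum>q\<in>{q \<in> paths N Nb r k. q ! r = j}. \<Prod>t<r. H $$ (q ! t, q ! Suc t))"
  using j
proof (induction r arbitrary: j)
  case 0
  have "{q \<in> paths N Nb 0 k. q ! 0 = j} = (if k = j then {[k]} else {})" using paths_0[OF k] by auto
  then show ?case using H k 0 by auto
next
  case (Suc r)
  let ?P = "paths N Nb r k"
  let ?f = "\<lambda>q. \<Prod>t<r. H $$ (q ! t, q ! Suc t)"
  have fin: "finite ?P" by (rule paths_finite)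
  have "(H ^\<^sub>m Suc r) $$ (k, j) = (\<Sum>l<N. (H ^\<^sub>m r) $$ (k, l) * H $$ (l, j))"
    using H k Suc.prems by (simp add: scalar_prod_def atLeast0LessThan)
  also have "\<dots> = (\<Sum>l<N. \<Sum>q\<in>{q \<in> ?P. q ! r = l}. ?f q * H $$ (q ! r, j))"
    using Suc.IH by (simp add: sum_distrib_right)
  also have "\<dots> = (\<Sum>q\<in>?P. ?f q * H $$ (q ! r, j))"
    by (rule sum.group[OF fin finite_lessThan]) (auto intro: path_last_lt)
  also have "\<dots> = (\<Sum>q\<in>?P. if j \<in> Nb (q ! r) then ?f q * H $$ (q ! r, j) else 0)"
  proof (intro sum.cong refl)
    fix q assume q: "q \<in> ?P"
    have "q ! r < N" using q by (rule path_last_lt)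
    then have "j \<notin> Nb (q ! r) \<Longrightarrow> H $$ (q ! r, j) = 0" using supp Suc.prems by blast
    then show "?f q * H $$ (q ! r, j) = (if j \<in> Nb (q ! r) then ?f q * H $$ (q ! r, j) else 0)" by auto
  qed
  also have "\<dots> = (\<Sum>q\<in>{q \<in> ?P. j \<in> Nb (q ! r)}. ?f q * H $$ (q ! r, j))"
    by (simp add: sum.inter_filter[OF fin])
  also have "\<dots> = (\<Sum>q\<in>{q \<in> ?P. j \<in> Nb (q ! r)}. \<Prod>t<Suc r. H $$ ((q @ [j]) ! t, (q @ [j]) ! Suc t))"
  proof (intro sum.cong refl)
    fix q assume "q \<in> {q \<in> ?P. j \<in> Nb (q ! r)}"
    then have l: "length q = Suc r" unfolding paths_def by auto
    have "(\<Prod>t<Suc r. H $$ ((q @ [j]) ! t, (q @ [j]) ! Suc t)) = (\<Prod>t<r. H $$ ((q @ [j]) ! t, (q @ [j]) ! Suc t)) * H $$ ((q @ [j]) ! r, (q @ [j]) ! Suc r)"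
      by simp
    also have "\<dots> = ?f q * H $$ (q ! r, j)"
      using l by (simp add: nth_append)
    finally show "?f q * H $$ (q ! r, j) = (\<Prod>t<Suc r. H $$ ((q @ [j]) ! t, (q @ [j]) ! Suc t))" by simp
  qed
  also have "\<dots> = (\<Sum>p\<in>{p \<in> paths N Nb (Suc r) k. p ! Suc r = j}. \<Prod>t<Suc r. H $$ (p ! t, p ! Suc t))"
    unfolding paths_Suc_end[OF Suc.prems k] by (rule sum.reindex[symmetric, unfolded comp_def]) (auto simp: inj_on_def)
  finally show ?case .
qed



definition Wv :: "nat \<Rightarrow> complex mat \<Rightarrow> (nat \<Rightarrow> nat \<Rightarrow> complex) \<Rightarrow> nat list \<Rightarrow> nat \<Rightarrow> complex vec" where
  "Wv N H \<sigma> p s = \<sigma> (p ! s) (p ! Suc s) \<cdot>\<^sub>v unit_vec (2 * N) (p ! Suc s)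
     + complex_of_real (sqrt (1 - cmod (H $$ (p ! s, p ! Suc s)))) \<cdot>\<^sub>v unit_vec (2 * N) (p ! Suc s + N)"

definition Lst :: "nat \<Rightarrow> complex mat \<Rightarrow> (nat \<Rightarrow> nat \<Rightarrow> complex) \<Rightarrow> nat \<Rightarrow> nat \<Rightarrow> nat list \<Rightarrow> complex vec list" where
  "Lst N H \<sigma> r j0 p = map (\<lambda>i. unit_vec (2 * N) i) p @ [unit_vec (2 * N) j0] @ map (Wv N H \<sigma> p) [0..<r]"

lemma Psi_alt: "Psi N H Nb d \<sigma> r j0 = vec ((2 * N) ^ (2 * r + 2))
   (\<lambda>k. complex_of_real (1 / sqrt (real d ^ r)) * (\<Sum>p\<in>paths N Nb r j0. tensor_list (2 * N) (Lst N H \<sigma> r j0 p) $ k))"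
  unfolding Psi_def Let_def Lst_def Wv_def ..

lemma pm2: "length xs = length ys \<Longrightarrow> prod_list (map2 f xs ys) = (\<Prod>i<length xs. f (xs ! i) (ys ! i))"
  by (simp add: prod.list_conv_set_nth atLeast0LessThan)

lemma Wv_dim[simp]: "dim_vec (Wv N H \<sigma> p s) = 2 * N"
  unfolding Wv_def by simp

lemma Wv_index: assumes a: "a < N" and ps: "p ! Suc s < N"
  shows "Wv N H \<sigma> p s $ a = (if a = p ! Suc s then \<sigma> (p ! s) (p ! Suc s) else 0)"
  unfolding Wv_def using a ps by auto

lemma Lst_dims: "\<forall>v\<in>set (Lst N H \<sigma> r j0 p). dim_vec v = 2 * N"
  unfolding Lst_def by auto

lemma Lst_length: "length p = Suc r \<Longrightarrow> length (Lst N H \<sigma> r j0 p) = 2 * r + 2"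
  unfolding Lst_def by simp

locale qs =
  fixes N :: nat and H :: "complex mat" and Nb :: "nat \<Rightarrow> nat set" and \<sigma> :: "nat \<Rightarrow> nat \<Rightarrow> complex"
  assumes N_pos: "N > 0"
    and H_dim: "H \<in> carrier_mat N N"
    and H_herm: "\<forall>a<N. \<forall>b<N. H $$ (a, b) = cnj (H $$ (b, a))"
    and Nb_sub: "\<forall>j<N. Nb j \<subseteq> {..<N}"
    and Nb_supp: "\<forall>j<N. {k. k < N \<and> H $$ (j, k) \<noteq> 0} \<subseteq> Nb j"
    and Nb_sym: "\<forall>j<N. \<forall>k<N. k \<in> Nb j \<longleftrightarrow> j \<in> Nb k"
    and \<sigma>_prod: "\<forall>j<N. \<forall>k<N. \<sigma> j k * cnj (\<sigma> k j) = cnj (H $$ (j, k))"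
begin

lemma pathD: assumes "p \<in> paths N Nb r j"
  shows "length p = Suc r" "p ! 0 = j" "\<And>i. i < Suc r \<Longrightarrow> p ! i < N" "\<And>s. s < r \<Longrightarrow> p ! Suc s \<in> Nb (p ! s)"
  using assms unfolding paths_def by auto

lemma rev_path: assumes p: "p \<in> paths N Nb r j" and k: "k < N"
  shows "rev p \<in> paths N Nb r k \<longleftrightarrow> p ! r = k"
proof -
  note P = pathD[OF p]
  have rn: "\<And>i. i < Suc r \<Longrightarrow> rev p ! i = p ! (r - i)" using P(1) by (simp add: rev_nth)
  have edges: "\<forall>s<r. rev p ! Suc s \<in> Nb (rev p ! s)"
  proof (intro allI impI)
    fix s assume s: "s < r"
    have e: "p ! Suc (r - Suc s) \<in> Nb (p ! (r - Suc s))" using P(4)[of "r - Suc s"] s by simp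
    have "Suc (r - Suc s) = r - s" using s by simp
    then have e': "p ! (r - s) \<in> Nb (p ! (r - Suc s))" using e by simp
    have "p ! (r - s) < N" "p ! (r - Suc s) < N" using P(3) s by auto
    then have "p ! (r - Suc s) \<in> Nb (p ! (r - s))" using e' Nb_sym by blast
    then show "rev p ! Suc s \<in> Nb (rev p ! s)" using rn s by simp
  qed
  have "\<forall>i\<in>set (rev p). i < N" using P(1) P(3) by (auto simp: in_set_conv_nth)
  then show ?thesis unfolding paths_def using edges P(1) rn[of 0] by auto
qed

lemma ip_e_W: assumes a: "a < N" and ps: "p ! Suc s < N"
  shows "ip (unit_vec (2 * N) a) (Wv N H \<sigma> p s) = (if a = p ! Suc s then \<sigma> (p ! s) (p ! Suc s) else 0)"
  using a ps by (simp add: ip_unit_left Wv_index)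

lemma ip_W_e: assumes ps: "p ! Suc s < N"
  shows "ip (Wv N H \<sigma> p s) (unit_vec (2 * N) (p ! Suc s)) = cnj (\<sigma> (p ! s) (p ! Suc s))"
  using ps by (simp add: ip_unit_right Wv_index)

lemma ip_e_e: "a < N \<Longrightarrow> c < N \<Longrightarrow> ip (unit_vec (2 * N) a) (unit_vec (2 * N) c) = (if c = a then 1 else 0)"
  by (simp add: ip_unit_left)


lemma Lst_nth_lo: "length p = Suc r \<Longrightarrow> i < Suc r \<Longrightarrow> Lst N H \<sigma> r j0 p ! i = unit_vec (2 * N) (p ! i)"
  unfolding Lst_def by (simp add: nth_append)

lemma Lst_nth_mid: "length p = Suc r \<Longrightarrow> Lst N H \<sigma> r j0 p ! Suc r = unit_vec (2 * N) j0"
  unfolding Lst_def by (simp add: nth_append)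

lemma Lst_nth_hi: "length p = Suc r \<Longrightarrow> s < r \<Longrightarrow> Lst N H \<sigma> r j0 p ! (Suc (Suc r) + s) = Wv N H \<sigma> p s"
  unfolding Lst_def by (simp add: nth_append)

lemma Lst_rev_nth: "length p = Suc r \<Longrightarrow> i < 2 * r + 2 \<Longrightarrow> rev (Lst N H \<sigma> r j0 p) ! i = Lst N H \<sigma> r j0 p ! (2 * r + 1 - i)"
  by (simp add: rev_nth Lst_length)

lemma Z: assumes p: "p \<in> paths N Nb r j" and q: "q \<in> paths N Nb r k" and k: "k < N"
  and ne: "p \<noteq> rev q"
  shows "prod_list (map2 ip (Lst N H \<sigma> r j p) (rev (Lst N H \<sigma> r k q))) = 0"
proof -
  note P = pathD[OF p] and Q = pathD[OF q]
  obtain i where i: "i < Suc r" "p ! i \<noteq> q ! (r - i)"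
  proof (rule ccontr)
    assume "\<not> thesis"
    then have all: "\<forall>i<Suc r. p ! i = q ! (r - i)" using that by blast
    have "p = rev q"
    proof (rule nth_equalityI)
      show "length p = length (rev q)" using P(1) Q(1) by simp
      fix i assume "i < length p"
      then show "p ! i = rev q ! i" using all P(1) Q(1) by (simp add: rev_nth)
    qed
    then show False using ne by simp
  qed
  let ?xs = "Lst N H \<sigma> r j p" and ?ys = "rev (Lst N H \<sigma> r k q)"
  have lx: "length ?xs = 2 * r + 2" using Lst_length[OF P(1)] .
  have ly: "length ?ys = 2 * r + 2" using Lst_length[OF Q(1)] by simp
  have xi: "?xs ! i = unit_vec (2 * N) (p ! i)" by (rule Lst_nth_lo[OF P(1) i(1)])
  have yi: "?ys ! i = Lst N H \<sigma> r k q ! (2 * r + 1 - i)" using i(1) by (intro Lst_rev_nth[OF Q(1)]) simp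
  have pi: "p ! i < N" using P(3)[OF i(1)] .
  have z: "ip (?xs ! i) (?ys ! i) = 0"
  proof (cases "i < r")
    case True
    define s where "s = r - Suc i"
    have s: "s < r" "Suc s = r - i" "2 * r + 1 - i = Suc (Suc r) + s" using True unfolding s_def by auto
    have "?ys ! i = Wv N H \<sigma> q s" unfolding yi s(3) by (rule Lst_nth_hi[OF Q(1) s(1)])
    moreover have "q ! Suc s < N" using Q(3)[of "Suc s"] s by simp
    ultimately show ?thesis unfolding xi using ip_e_W[OF pi] i(2) s(2) by simp
  next
    case False
    then have ir: "i = r" using i(1) by simp
    have "?ys ! i = unit_vec (2 * N) k" unfolding yi using ir Lst_nth_mid[OF Q(1)] by simp
    moreover have "p ! r \<noteq> k" using i(2) ir Q(2) by simp
    ultimately show ?thesis unfolding xi using ip_e_e[OF pi k] ir by simp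
  qed
  have "prod_list (map2 ip ?xs ?ys) = (\<Prod>t<length ?xs. ip (?xs ! t) (?ys ! t))"
    using lx ly by (intro pm2) simp
  also have "\<dots> = 0" using z i(1) lx by (intro prod_zero) auto
  finally show ?thesis .
qed

lemma G: assumes p: "p \<in> paths N Nb r j" and k: "p ! r = k"
  shows "prod_list (map2 ip (Lst N H \<sigma> r j p) (rev (Lst N H \<sigma> r k (rev p)))) = (\<Prod>i<r. H $$ (p ! i, p ! Suc i))"
proof -
  note P = pathD[OF p]
  let ?e = "\<lambda>i. unit_vec (2 * N) i"
  let ?q = "rev p"
  have lq: "length ?q = Suc r" using P(1) by simp
  have j: "j < N" using P(3)[of 0] P(2) by simp
  have kN: "k < N" using P(3)[of r] k by simp
  have qn: "\<And>i. i < Suc r \<Longrightarrow> ?q ! i = p ! (r - i)" using P(1) by (simp add: rev_nth)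
  have split1: "Lst N H \<sigma> r j p = map ?e p @ (?e j # map (Wv N H \<sigma> p) [0..<r])" unfolding Lst_def by simp
  have split2: "rev (Lst N H \<sigma> r k ?q) = (rev (map (Wv N H \<sigma> ?q) [0..<r]) @ [?e k]) @ map ?e p"
    unfolding Lst_def by (simp add: rev_map)
  have "prod_list (map2 ip (Lst N H \<sigma> r j p) (rev (Lst N H \<sigma> r k ?q)))
     = prod_list (map2 ip (map ?e p) (rev (map (Wv N H \<sigma> ?q) [0..<r]) @ [?e k]))
       * prod_list (map2 ip (?e j # map (Wv N H \<sigma> p) [0..<r]) (map ?e p))"
  proof -
    have l: "length (map ?e p) = length (rev (map (Wv N H \<sigma> ?q) [0..<r]) @ [?e k])" using P(1) by simp
    show ?thesis unfolding split1 split2 zip_append[OF l] map_append prod_list.append ..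
  qed
  also have "prod_list (map2 ip (map ?e p) (rev (map (Wv N H \<sigma> ?q) [0..<r]) @ [?e k]))
     = (\<Prod>i<r. \<sigma> (p ! Suc i) (p ! i))"
  proof -
    have bp: "map ?e p = map ?e (take r p) @ [?e (p ! r)]"
    proof -
      have "p = take r p @ [p ! r]" using take_Suc_conv_app_nth[of r p] P(1) by simp
      then have "map ?e p = map ?e (take r p @ [p ! r])" by (rule arg_cong)
      then show ?thesis by (simp only: map_append list.map)
    qed
    have "prod_list (map2 ip (map ?e p) (rev (map (Wv N H \<sigma> ?q) [0..<r]) @ [?e k]))
        = prod_list (map2 ip (map ?e (take r p)) (rev (map (Wv N H \<sigma> ?q) [0..<r]))) * ip (?e (p ! r)) (?e k)"
      unfolding bp using P(1) by simp
    also have "ip (?e (p ! r)) (?e k) = 1" using ip_e_e[OF kN kN] k by simp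
    also have "prod_list (map2 ip (map ?e (take r p)) (rev (map (Wv N H \<sigma> ?q) [0..<r])))
        = (\<Prod>i<r. ip (?e (p ! i)) (Wv N H \<sigma> ?q (r - Suc i)))"
      using P(1) by (subst pm2) (auto simp: rev_nth)
    also have "\<dots> = (\<Prod>i<r. \<sigma> (p ! Suc i) (p ! i))"
    proof (intro prod.cong refl)
      fix i assume i: "i \<in> {..<r}"
      have a: "?q ! Suc (r - Suc i) = p ! i" using qn[of "Suc (r - Suc i)"] i by simp
      have b: "?q ! (r - Suc i) = p ! Suc i" using qn[of "r - Suc i"] i by simp
      have pi: "p ! i < N" using P(3)[of i] i by simp
      show "ip (?e (p ! i)) (Wv N H \<sigma> ?q (r - Suc i)) = \<sigma> (p ! Suc i) (p ! i)"
        using ip_e_W[of "p ! i" ?q "r - Suc i"] a b pi by simp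
    qed
    finally show ?thesis by simp
  qed
  also have "prod_list (map2 ip (?e j # map (Wv N H \<sigma> p) [0..<r]) (map ?e p))
     = (\<Prod>i<r. cnj (\<sigma> (p ! i) (p ! Suc i)))"
  proof -
    have bp: "map ?e p = ?e (p ! 0) # map ?e (drop 1 p)"
    proof -
      have "p = p ! 0 # drop 1 p" using Cons_nth_drop_Suc[of 0 p] P(1) by simp
      then have "map ?e p = map ?e (p ! 0 # drop 1 p)" by (rule arg_cong)
      then show ?thesis by (simp only: list.map)
    qed
    have "prod_list (map2 ip (?e j # map (Wv N H \<sigma> p) [0..<r]) (map ?e p))
        = ip (?e j) (?e (p ! 0)) * prod_list (map2 ip (map (Wv N H \<sigma> p) [0..<r]) (map ?e (drop 1 p)))"
      unfolding bp by simp
    also have "ip (?e j) (?e (p ! 0)) = 1" using ip_e_e[OF j j] P(2) by simp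
    also have "prod_list (map2 ip (map (Wv N H \<sigma> p) [0..<r]) (map ?e (drop 1 p)))
        = (\<Prod>i<r. ip (Wv N H \<sigma> p i) (?e (p ! Suc i)))"
      using P(1) by (subst pm2) auto
    also have "\<dots> = (\<Prod>i<r. cnj (\<sigma> (p ! i) (p ! Suc i)))"
    proof (intro prod.cong refl)
      fix i assume i: "i \<in> {..<r}"
      have "p ! Suc i < N" using P(3)[of "Suc i"] i by simp
      then show "ip (Wv N H \<sigma> p i) (?e (p ! Suc i)) = cnj (\<sigma> (p ! i) (p ! Suc i))" by (rule ip_W_e)
    qed
    finally show ?thesis by simp
  qed
  also have "(\<Prod>i<r. \<sigma> (p ! Suc i) (p ! i)) * (\<Prod>i<r. cnj (\<sigma> (p ! i) (p ! Suc i)))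
      = (\<Prod>i<r. H $$ (p ! i, p ! Suc i))"
    unfolding prod.distrib[symmetric]
  proof (intro prod.cong refl)
    fix i assume i: "i \<in> {..<r}"
    have a: "p ! i < N" "p ! Suc i < N" using P(3)[of i] P(3)[of "Suc i"] i by auto
    have "\<sigma> (p ! Suc i) (p ! i) * cnj (\<sigma> (p ! i) (p ! Suc i)) = cnj (H $$ (p ! Suc i, p ! i))"
      by (rule \<sigma>_prod[rule_format, OF a(2) a(1)])
    also have "\<dots> = H $$ (p ! i, p ! Suc i)" using H_herm[rule_format, OF a(1) a(2)] by simp
    finally show "\<sigma> (p ! Suc i) (p ! i) * cnj (\<sigma> (p ! i) (p ! Suc i)) = H $$ (p ! i, p ! Suc i)" .
  qed
  finally show ?thesis .
qed

end



context qs begin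

lemma inner_sum: assumes j: "j < N" and k: "k < N"
  shows "(\<Sum>p\<in>paths N Nb r j. \<Sum>q\<in>paths N Nb r k. prod_list (map2 ip (Lst N H \<sigma> r j p) (rev (Lst N H \<sigma> r k q))))
       = (H ^\<^sub>m r) $$ (j, k)"
proof -
  let ?F = "\<lambda>p q. prod_list (map2 ip (Lst N H \<sigma> r j p) (rev (Lst N H \<sigma> r k q)))"
  let ?G = "\<lambda>p. \<Prod>t<r. H $$ (p ! t, p ! Suc t)"
  have inner: "(\<Sum>q\<in>paths N Nb r k. ?F p q) = (if p ! r = k then ?G p else 0)"
    if p: "p \<in> paths N Nb r j" for p
  proof -
    have "(\<Sum>q\<in>paths N Nb r k. ?F p q) = (\<Sum>q\<in>paths N Nb r k. if q = rev p then ?F p q else 0)"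
    proof (intro sum.cong refl)
      fix q assume q: "q \<in> paths N Nb r k"
      show "?F p q = (if q = rev p then ?F p q else 0)"
      proof (cases "q = rev p")
        case False
        then have "p \<noteq> rev q" by auto
        then show ?thesis using Z[OF p q k] False by simp
      qed simp
    qed
    also have "\<dots> = (if rev p \<in> paths N Nb r k then ?F p (rev p) else 0)"
      using paths_finite by (simp add: sum.delta')
    also have "\<dots> = (if p ! r = k then ?G p else 0)"
    proof (cases "p ! r = k")
      case True then show ?thesis using rev_path[OF p k] G[OF p True] by simp
    next
      case False then show ?thesis using rev_path[OF p k] by simp
    qed
    finally show ?thesis .
  qed
  have "(\<Sum>p\<in>paths N Nb r j. \<Sum>q\<in>paths N Nb r k. ?F p q) = (\<Sum>p\<in>paths N Nb r j. if p ! r = k then ?G p else 0)"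
    using inner by (intro sum.cong) auto
  also have "\<dots> = (\<Sum>p\<in>{p \<in> paths N Nb r j. p ! r = k}. ?G p)"
    using paths_finite by (simp add: sum.inter_filter)
  also have "\<dots> = (H ^\<^sub>m r) $$ (j, k)"
    using path_sum[OF H_dim Nb_supp j k] by simp
  finally show ?thesis .
qed

lemma Psi_carrier: "Psi N H Nb d \<sigma> r j \<in> carrier_vec ((2 * N) ^ (2 * r + 2))"
  unfolding Psi_alt carrier_vec_def by simp

lemma main_ip: assumes j: "j < N" and k: "k < N"
  shows "ip (Psi N H Nb d \<sigma> r j) (SW (2 * N) (2 * r + 2) *\<^sub>v Psi N H Nb d \<sigma> r k)
     = complex_of_real (1 / real d ^ r) * (H ^\<^sub>m r) $$ (j, k)"
proof -
  define b where "b = 2 * N"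
  define m where "m = 2 * r + 2"
  have b: "b > 0" using N_pos unfolding b_def by simp
  define c where "c = complex_of_real (1 / sqrt (real d ^ r))"
  let ?T = "\<lambda>p. tensor_list b (Lst N H \<sigma> r j p)"
  let ?R = "\<lambda>q. tensor_list b (rev (Lst N H \<sigma> r k q))"
  have len: "\<And>p i. p \<in> paths N Nb r i \<Longrightarrow> length (Lst N H \<sigma> r i p) = m"
    unfolding m_def using Lst_length pathD(1) by blast
  have Psi_j: "Psi N H Nb d \<sigma> r j = vec (b ^ m) (\<lambda>i. c * (\<Sum>p\<in>paths N Nb r j. ?T p $ i))"
    unfolding Psi_alt b_def m_def c_def ..
  have SPsi: "(SW b m *\<^sub>v Psi N H Nb d \<sigma> r k) $ i = c * (\<Sum>q\<in>paths N Nb r k. ?R q $ i)"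
    if i: "i < b ^ m" for i
  proof -
    have "(SW b m *\<^sub>v Psi N H Nb d \<sigma> r k) $ i = Psi N H Nb d \<sigma> r k $ revidx b m i"
    proof -
      have Pk: "Psi N H Nb d \<sigma> r k \<in> carrier_vec (b ^ m)" unfolding b_def m_def by (rule Psi_carrier)
      show ?thesis using SW_apply[OF b Pk] i by simp
    qed
    also have "\<dots> = c * (\<Sum>q\<in>paths N Nb r k. tensor_list b (Lst N H \<sigma> r k q) $ revidx b m i)"
      unfolding Psi_alt using revidx_lt[OF b, of m i] unfolding b_def m_def c_def by simp
    also have "\<dots> = c * (\<Sum>q\<in>paths N Nb r k. ?R q $ i)"
    proof -
      have "tensor_list b (Lst N H \<sigma> r k q) $ revidx b m i = ?R q $ i" if q: "q \<in> paths N Nb r k" for q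
      proof -
        have tc: "tensor_list b (Lst N H \<sigma> r k q) \<in> carrier_vec (b ^ m)"
          unfolding carrier_vec_def using len[OF q] by simp
        have "?R q $ i = (SW b m *\<^sub>v tensor_list b (Lst N H \<sigma> r k q)) $ i"
          using SW_tensor[OF b len[OF q]] by simp
        also have "\<dots> = tensor_list b (Lst N H \<sigma> r k q) $ revidx b m i"
          using SW_apply[OF b tc] i by simp
        finally show ?thesis by simp
      qed
      then show ?thesis by simp
    qed
    finally show ?thesis .
  qed
  have "ip (Psi N H Nb d \<sigma> r j) (SW b m *\<^sub>v Psi N H Nb d \<sigma> r k)
      = (\<Sum>i<b ^ m. cnj (c * (\<Sum>p\<in>paths N Nb r j. ?T p $ i)) * (c * (\<Sum>q\<in>paths N Nb r k. ?R q $ i)))"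
    unfolding ip_def using SPsi by (simp add: Psi_j)
  also have "\<dots> = (\<Sum>i<b ^ m. cnj c * c * (\<Sum>p\<in>paths N Nb r j. \<Sum>q\<in>paths N Nb r k. cnj (?T p $ i) * ?R q $ i))"
    by (intro sum.cong refl) (simp add: sum_product mult_ac)
  also have "\<dots> = cnj c * c * (\<Sum>p\<in>paths N Nb r j. \<Sum>q\<in>paths N Nb r k. \<Sum>i<b ^ m. cnj (?T p $ i) * ?R q $ i)"
    by (simp add: sum_distrib_left sum.swap[of _ "{..<b ^ m}"])
  also have "\<dots> = cnj c * c * (\<Sum>p\<in>paths N Nb r j. \<Sum>q\<in>paths N Nb r k. prod_list (map2 ip (Lst N H \<sigma> r j p) (rev (Lst N H \<sigma> r k q))))"
  proof -
    have "(\<Sum>i<b ^ m. cnj (?T p $ i) * ?R q $ i) = prod_list (map2 ip (Lst N H \<sigma> r j p) (rev (Lst N H \<sigma> r k q)))"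
      if p: "p \<in> paths N Nb r j" and q: "q \<in> paths N Nb r k" for p q
    proof -
      have "(\<Sum>i<b ^ m. cnj (?T p $ i) * ?R q $ i) = ip (?T p) (?R q)"
        unfolding ip_def using len[OF p] by simp
      also have "\<dots> = prod_list (map2 ip (Lst N H \<sigma> r j p) (rev (Lst N H \<sigma> r k q)))"
        using len[OF p] len[OF q] Lst_dims unfolding b_def by (intro ip_tensor) (auto simp: b_def N_pos)
      finally show ?thesis .
    qed
    then show ?thesis by simp
  qed
  also have "\<dots> = cnj c * c * (H ^\<^sub>m r) $$ (j, k)" using inner_sum[OF j k] by simp
  also have "cnj c * c = complex_of_real (1 / real d ^ r)"
  proof -
    have cc: "cnj c = c" unfolding c_def by (rule complex_cnj_complex_of_real)
    have "cnj c * c = complex_of_real ((1 / sqrt (real d ^ r)) * (1 / sqrt (real d ^ r)))"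
      unfolding cc unfolding c_def by (rule of_real_mult[symmetric])
    also have "(1 / sqrt (real d ^ r)) * (1 / sqrt (real d ^ r)) = 1 / real d ^ r"
    proof -
      have "sqrt (real d ^ r) * sqrt (real d ^ r) = real d ^ r" by (simp add: real_sqrt_mult_self)
      then show ?thesis by (metis divide_divide_eq_left div_by_1 times_divide_eq_right mult_1_right)
    qed
    finally show ?thesis .
  qed
  finally show ?thesis unfolding b_def m_def .
qed

end



lemma adj_mult_entry: assumes X: "X \<in> carrier_mat n m" and Y: "Y \<in> carrier_mat n l"
  and j: "j < m" and k: "k < l"
  shows "(mat_adjoint X * Y) $$ (j, k) = ip (col X j) (col (Y::complex mat) k)"
proof -
  have "(mat_adjoint X * Y) $$ (j, k) = row (mat_adjoint X) j \<bullet> col Y k"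
    using X Y j k by simp
  also have "\<dots> = (\<Sum>i\<in>{0..<n}. row (mat_adjoint X) j $ i * col Y k $ i)"
    unfolding scalar_prod_def using Y by simp
  also have "\<dots> = ip (col X j) (col Y k)"
    unfolding ip_def atLeast0LessThan using X Y j k by (intro sum.cong) auto
  finally show ?thesis .
qed

lemma adj_mult: assumes A: "A \<in> carrier_mat n l" and B: "B \<in> carrier_mat l m"
  shows "mat_adjoint (A * B) = mat_adjoint B * mat_adjoint (A::complex mat)"
proof (rule eq_matI)
  fix i j assume i: "i < dim_row (mat_adjoint B * mat_adjoint A)" and j: "j < dim_col (mat_adjoint B * mat_adjoint A)"
  then have i: "i < m" and j: "j < n" using A B by auto
  have "mat_adjoint (A * B) $$ (i, j) = cnj (row A j \<bullet> col B i)" using A B i j by simp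
  also have "\<dots> = (\<Sum>k\<in>{0..<l}. cnj (A $$ (j, k)) * cnj (B $$ (k, i)))"
    unfolding scalar_prod_def using A B i j by simp
  also have "\<dots> = (\<Sum>k\<in>{0..<l}. row (mat_adjoint B) i $ k * col (mat_adjoint A) j $ k)"
    using A B i j by (intro sum.cong) auto
  also have "\<dots> = row (mat_adjoint B) i \<bullet> col (mat_adjoint A) j"
    unfolding scalar_prod_def using A B by simp
  also have "\<dots> = (mat_adjoint B * mat_adjoint A) $$ (i, j)"
    using A B i j by simp
  finally show "mat_adjoint (A * B) $$ (i, j) = (mat_adjoint B * mat_adjoint A) $$ (i, j)" .
qed (use A B in auto)

lemma smult_pow: assumes A: "A \<in> carrier_mat n n"
  shows "(a \<cdot>\<^sub>m A) ^\<^sub>m k = (a ^ k :: complex) \<cdot>\<^sub>m (A ^\<^sub>m k)"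
proof (induction k)
  case 0 then show ?case using A by (intro eq_matI) auto
next
  case (Suc k)
  have Ak: "A ^\<^sub>m k \<in> carrier_mat n n" using A by simp
  have "(a \<cdot>\<^sub>m A) ^\<^sub>m Suc k = (a ^ k \<cdot>\<^sub>m (A ^\<^sub>m k)) * (a \<cdot>\<^sub>m A)" using Suc by simp
  also have "\<dots> = a ^ k \<cdot>\<^sub>m ((A ^\<^sub>m k) * (a \<cdot>\<^sub>m A))"
    using Ak A by (intro mult_smult_assoc_mat) auto
  also have "(A ^\<^sub>m k) * (a \<cdot>\<^sub>m A) = a \<cdot>\<^sub>m ((A ^\<^sub>m k) * A)"
    using Ak A by (intro mult_smult_distrib) auto
  also have "a ^ k \<cdot>\<^sub>m (a \<cdot>\<^sub>m ((A ^\<^sub>m k) * A)) = a ^ Suc k \<cdot>\<^sub>m (A ^\<^sub>m Suc k)"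
    by (intro eq_matI) (auto simp: mult_ac)
  finally show ?case .
qed

lemma vec_tri3: assumes "x \<in> carrier_vec n" "y \<in> carrier_vec n" "z \<in> carrier_vec n"
  shows "vec_norm2 (x - y) \<le> vec_norm2 (x - z) + vec_norm2 (z - (y :: complex vec))"
proof -
  have "x - y = (x - z) + (z - y)" using assms by (intro eq_vecI) auto
  moreover have "dim_vec (z - y) = dim_vec (x - z)" using assms by simp
  ultimately show ?thesis using norm2_add by metis
qed



lemma chain5: assumes A: "A \<in> carrier_mat n1 n2" and B: "B \<in> carrier_mat n2 n3" and C: "C \<in> carrier_mat n3 n4"
  and D: "D \<in> carrier_mat n4 n5" and F: "F \<in> carrier_mat n5 n6" and v: "v \<in> carrier_vec n6"
  shows "(A * B * C * D * F) *\<^sub>v v = A *\<^sub>v (B *\<^sub>v (C *\<^sub>v (D *\<^sub>v (F *\<^sub>v (v :: complex vec)))))"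
proof -
  have AB: "A * B \<in> carrier_mat n1 n3" using A B by simp
  have ABC: "A * B * C \<in> carrier_mat n1 n4" using AB C by simp
  have ABCD: "A * B * C * D \<in> carrier_mat n1 n5" using ABC D by simp
  have Fv: "F *\<^sub>v v \<in> carrier_vec n5" using F v by simp
  have DFv: "D *\<^sub>v (F *\<^sub>v v) \<in> carrier_vec n4" using D Fv by simp
  have CDFv: "C *\<^sub>v (D *\<^sub>v (F *\<^sub>v v)) \<in> carrier_vec n3" using C DFv by simp
  have "(A * B * C * D * F) *\<^sub>v v = (A * B * C * D) *\<^sub>v (F *\<^sub>v v)" by (rule assoc_mult_mat_vec[OF ABCD F v])
  also have "\<dots> = (A * B * C) *\<^sub>v (D *\<^sub>v (F *\<^sub>v v))" by (rule assoc_mult_mat_vec[OF ABC D Fv])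
  also have "\<dots> = (A * B) *\<^sub>v (C *\<^sub>v (D *\<^sub>v (F *\<^sub>v v)))" by (rule assoc_mult_mat_vec[OF AB C DFv])
  also have "\<dots> = A *\<^sub>v (B *\<^sub>v (C *\<^sub>v (D *\<^sub>v (F *\<^sub>v v))))" by (rule assoc_mult_mat_vec[OF A B CDFv])
  finally show ?thesis .
qed

lemma unitary_facts: assumes U: "U \<in> carrier_mat M M" and u: "unitary_mat U"
  shows "mat_adjoint U * U = 1\<^sub>m M" "U * mat_adjoint U = 1\<^sub>m M"
    "\<And>v. v \<in> carrier_vec M \<Longrightarrow> vec_norm2 (U *\<^sub>v v) = vec_norm2 v"
    "\<And>w. w \<in> carrier_vec M \<Longrightarrow> vec_norm2 (mat_adjoint U *\<^sub>v w) \<le> vec_norm2 w"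
proof -
  show 1: "mat_adjoint U * U = 1\<^sub>m M" using u U unfolding unitary_mat_def by auto
  show "U * mat_adjoint U = 1\<^sub>m M" using u U unfolding unitary_mat_def by auto
  show n: "\<And>v. v \<in> carrier_vec M \<Longrightarrow> vec_norm2 (U *\<^sub>v v) = vec_norm2 v" by (rule iso_norm[OF U 1])
  show "\<And>w. w \<in> carrier_vec M \<Longrightarrow> vec_norm2 (mat_adjoint U *\<^sub>v w) \<le> vec_norm2 w"
    using adj_bound[OF U, of 1] n by simp
qed

theorem mainTheorem4:
  fixes n N d r :: nat
    and H :: "complex mat"
    and Nb :: "nat \<Rightarrow> nat set"
    and \<sigma> :: "nat \<Rightarrow> nat \<Rightarrow> complex"
    and T Tt :: "complex mat"
    and \<epsilon> :: real
  assumes N_def: "N = 2 ^ n"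
    and H_dim: "H \<in> carrier_mat N N"
    and H_herm: "hermitian_mat H"
    and H_max: "\<forall>j<N. \<forall>k<N. cmod (H $$ (j, k)) \<le> 1"
    and Nb_sub: "\<forall>j<N. Nb j \<subseteq> {..<N}"
    and Nb_card: "\<forall>j<N. card (Nb j) = d"
    and Nb_supp: "\<forall>j<N. {k. k < N \<and> H $$ (j, k) \<noteq> 0} \<subseteq> Nb j"
    and Nb_sym: "\<forall>j<N. \<forall>k<N. k \<in> Nb j \<longleftrightarrow> j \<in> Nb k"
    and \<sigma>_abs: "\<forall>j<N. \<forall>k<N. (cmod (\<sigma> j k))\<^sup>2 = cmod (H $$ (j, k))"
    and \<sigma>_prod: "\<forall>j<N. \<forall>k<N. \<sigma> j k * cnj (\<sigma> k j) = cnj (H $$ (j, k))"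
    and r_pos: "r \<ge> 1"
    and T_dim: "T \<in> carrier_mat ((2 * N) ^ (2 * r + 2)) ((2 * N) ^ (2 * r + 2))"
    and T_unitary: "unitary_mat T"
    and T_prep: "\<forall>j<N. T *\<^sub>v padded N r j = Psi N H Nb d \<sigma> r j"
    and eps_nonneg: "\<epsilon> \<ge> 0"
    and Tt_dim: "Tt \<in> carrier_mat ((2 * N) ^ (2 * r + 2)) ((2 * N) ^ (2 * r + 2))"
    and Tt_unitary: "unitary_mat Tt"
    and Tt_close: "spec_norm (Tt - T) \<le> \<epsilon> / 2"
  shows "spec_norm (mat_adjoint (Pi_iso N r) * mat_adjoint Tt * Swap N r * Tt * Pi_iso N r
                    - (1 / of_nat d \<cdot>\<^sub>m H) ^\<^sub>m r) \<le> \<epsilon>"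
proof -
  define b where "b = 2 * N"
  define m where "m = 2 * r + 2"
  define M where "M = b ^ m"
  have Npos: "N > 0" using N_def by simp
  have b: "b > 0" using Npos unfolding b_def by simp
  have herm: "\<forall>a<N. \<forall>c<N. H $$ (a, c) = cnj (H $$ (c, a))"
  proof (intro allI impI)
    fix a c assume a: "a < N" and c: "c < N"
    have "mat_adjoint H = H" using H_herm unfolding hermitian_mat_def by simp
    then have "H $$ (a, c) = mat_adjoint H $$ (a, c)" by simp
    also have "\<dots> = cnj (H $$ (c, a))" using a c H_dim by simp
    finally show "H $$ (a, c) = cnj (H $$ (c, a))" .
  qed
  interpret qs N H Nb \<sigma>
    using Npos H_dim herm Nb_sub Nb_supp Nb_sym \<sigma>_prod by unfold_locales
  let ?P = "Pi_iso N r"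
  let ?S = "Swap N r"
  have SSW: "?S = SW b m" unfolding b_def m_def by (rule Swap_SW)
  have Sc: "?S \<in> carrier_mat M M" unfolding SSW M_def by (rule SW_carrier)
  have Tc: "T \<in> carrier_mat M M" using T_dim unfolding M_def b_def m_def .
  have Ttc: "Tt \<in> carrier_mat M M" using Tt_dim unfolding M_def b_def m_def .
  have pad: "padded N r k = tensor_list b (unit_vec b k # replicate (2 * r + 1) (unit_vec b 0))" for k
    unfolding padded_def b_def ..
  have padc: "padded N r k \<in> carrier_vec M" for k
    unfolding pad carrier_vec_def M_def m_def by simp
  have Pc: "?P \<in> carrier_mat M N" unfolding Pi_iso_def M_def b_def m_def
    using mat_of_cols_carrier(1)[of "(2 * N) ^ (2 * r + 2)" "map (padded N r) [0..<N]"] by simp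
  have Pcol: "col ?P k = padded N r k" if k: "k < N" for k
    unfolding Pi_iso_def using k padc[of k] unfolding M_def b_def m_def by (subst col_mat_of_cols) auto
  have PP: "mat_adjoint ?P * ?P = 1\<^sub>m N"
  proof (rule eq_matI)
    fix j k assume j: "j < dim_row (1\<^sub>m N)" and k: "k < dim_col (1\<^sub>m N)"
    then have j: "j < N" and k: "k < N" by auto
    have "(mat_adjoint ?P * ?P) $$ (j, k) = ip (padded N r j) (padded N r k)"
      using adj_mult_entry[OF Pc Pc j k] Pcol j k by simp
    also have "\<dots> = prod_list (map2 ip (unit_vec b j # replicate (2 * r + 1) (unit_vec b 0))
                                     (unit_vec b k # replicate (2 * r + 1) (unit_vec b 0)))"
      unfolding pad by (rule ip_tensor[OF b]) auto
    also have "\<dots> = ip (unit_vec b j) (unit_vec b k) * (ip (unit_vec b 0) (unit_vec b 0)) ^ (2 * r + 1)"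
      by (simp add: zip_replicate)
    also have "\<dots> = (if k = j then 1 else 0)"
      using ip_e_e[OF j k] ip_e_e[OF Npos Npos] unfolding b_def by simp
    finally show "(mat_adjoint ?P * ?P) $$ (j, k) = 1\<^sub>m N $$ (j, k)" using j k by auto
  qed (use Pc in auto)
  have Pn: "vec_norm2 (?P *\<^sub>v v) = vec_norm2 v" if "v \<in> carrier_vec N" for v
    by (rule iso_norm[OF Pc PP that])
  have Padj: "vec_norm2 (mat_adjoint ?P *\<^sub>v w) \<le> vec_norm2 w" if "w \<in> carrier_vec M" for w
    using adj_bound[OF Pc, of 1] Pn that by simp
  note TU = unitary_facts[OF Tc T_unitary]
  note TtU = unitary_facts[OF Ttc Tt_unitary]
  have Sn: "vec_norm2 (?S *\<^sub>v w) = vec_norm2 w" if "w \<in> carrier_vec M" for w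
    unfolding SSW using SW_norm[OF b] that unfolding M_def by simp
  have Dn: "vec_norm2 ((Tt - T) *\<^sub>v w) \<le> \<epsilon> / 2 * vec_norm2 w" if w: "w \<in> carrier_vec M" for w
  proof -
    have "w \<in> carrier_vec (dim_col (Tt - T))" using w Tc Ttc by simp
    then have "vec_norm2 ((Tt - T) *\<^sub>v w) \<le> spec_norm (Tt - T) * vec_norm2 w" by (rule spec_norm_bound)
    also have "\<dots> \<le> \<epsilon> / 2 * vec_norm2 w" using Tt_close norm2_nonneg by (rule mult_right_mono)
    finally show ?thesis .
  qed
  have Dn': "vec_norm2 (Tt *\<^sub>v w - T *\<^sub>v w) \<le> \<epsilon> / 2 * vec_norm2 w" if w: "w \<in> carrier_vec M" for w
    using Dn[OF w] minus_mult_distrib_mat_vec[OF Ttc Tc w] by simp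
  have E_eq: "mat_adjoint ?P * mat_adjoint T * ?S * T * ?P = (1 / of_nat d \<cdot>\<^sub>m H) ^\<^sub>m r"
  proof -
    let ?X = "T * ?P"
    have Xc: "?X \<in> carrier_mat M N" using Tc Pc by simp
    have Yc: "?S * ?X \<in> carrier_mat M N" using Sc Xc by simp
    have "mat_adjoint ?P * mat_adjoint T = mat_adjoint ?X" using adj_mult[OF Tc Pc] by simp
    then have "mat_adjoint ?P * mat_adjoint T * ?S * T * ?P = mat_adjoint ?X * ?S * T * ?P" by simp
    also have "\<dots> = mat_adjoint ?X * (?S * ?X)"
    proof -
      have Ac: "mat_adjoint ?X \<in> carrier_mat N M" using Xc by simp
      have "mat_adjoint ?X * ?S * T * ?P = (mat_adjoint ?X * ?S) * (T * ?P)"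
      proof -
        have ASc: "mat_adjoint ?X * ?S \<in> carrier_mat N M" using Ac Sc by simp
        show ?thesis by (rule assoc_mult_mat[OF ASc Tc Pc])
      qed
      also have "\<dots> = mat_adjoint ?X * (?S * ?X)"
        using assoc_mult_mat[OF Ac Sc Xc] .
      finally show ?thesis .
    qed
    also have "\<dots> = (1 / of_nat d \<cdot>\<^sub>m H) ^\<^sub>m r"
    proof (rule eq_matI)
      fix j k assume j: "j < dim_row ((1 / of_nat d \<cdot>\<^sub>m H) ^\<^sub>m r)" and k: "k < dim_col ((1 / of_nat d \<cdot>\<^sub>m H) ^\<^sub>m r)"
      then have j: "j < N" and k: "k < N" using H_dim by (auto split: if_splits)
      have cx: "col ?X i = Psi N H Nb d \<sigma> r i" if "i < N" for i
        using col_mult2[OF Tc Pc that] Pcol[OF that] T_prep that by simp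
      have cy: "col (?S * ?X) k = ?S *\<^sub>v Psi N H Nb d \<sigma> r k"
        using col_mult2[OF Sc Xc k] cx[OF k] by simp
      have "(mat_adjoint ?X * (?S * ?X)) $$ (j, k) = ip (Psi N H Nb d \<sigma> r j) (SW (2 * N) (2 * r + 2) *\<^sub>v Psi N H Nb d \<sigma> r k)"
        using adj_mult_entry[OF Xc Yc j k] cx[OF j] cy Swap_SW by simp
      also have "\<dots> = complex_of_real (1 / real d ^ r) * (H ^\<^sub>m r) $$ (j, k)"
        by (rule main_ip[OF j k])
      also have "\<dots> = ((1 / of_nat d \<cdot>\<^sub>m H) ^\<^sub>m r) $$ (j, k)"
        using smult_pow[OF H_dim] j k H_dim by (simp add: power_divide)
      finally show "(mat_adjoint ?X * (?S * ?X)) $$ (j, k) = ((1 / of_nat d \<cdot>\<^sub>m H) ^\<^sub>m r) $$ (j, k)" .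
    qed (use Xc Yc H_dim in auto)
    finally show ?thesis .
  qed
  let ?Xt = "mat_adjoint ?P * mat_adjoint Tt * ?S * Tt * ?P"
  let ?E = "mat_adjoint ?P * mat_adjoint T * ?S * T * ?P"
  have Xtc: "?Xt \<in> carrier_mat N N"
    by (rule mult_carrier_mat[OF mult_carrier_mat[OF mult_carrier_mat[OF mult_carrier_mat[OF adj_carrier[OF Pc] adj_carrier[OF Ttc]] Sc] Ttc] Pc])
  have Ec: "?E \<in> carrier_mat N N"
    by (rule mult_carrier_mat[OF mult_carrier_mat[OF mult_carrier_mat[OF mult_carrier_mat[OF adj_carrier[OF Pc] adj_carrier[OF Tc]] Sc] Tc] Pc])
  show ?thesis
    unfolding E_eq[symmetric]
  proof (rule spec_norm_le[OF eps_nonneg])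
    fix v :: "complex vec" assume "v \<in> carrier_vec (dim_col (?Xt - ?E))"
    then have v: "v \<in> carrier_vec N" using Xtc Ec Pc by simp
    define u where "u = ?P *\<^sub>v v"
    have u: "u \<in> carrier_vec M" unfolding u_def using Pc v by simp
    have nu: "vec_norm2 u = vec_norm2 v" unfolding u_def by (rule Pn[OF v])
    define a where "a = mat_adjoint Tt *\<^sub>v (?S *\<^sub>v (Tt *\<^sub>v u))"
    define a' where "a' = mat_adjoint T *\<^sub>v (?S *\<^sub>v (T *\<^sub>v u))"
    have ac: "a \<in> carrier_vec M" unfolding a_def using Ttc Sc u adj_carrier[OF Ttc] by (meson mult_mat_vec_carrier)
    have ac': "a' \<in> carrier_vec M" unfolding a'_def using Tc Sc u adj_carrier[OF Tc] by (meson mult_mat_vec_carrier)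
    have Xv: "?Xt *\<^sub>v v = mat_adjoint ?P *\<^sub>v a"
      unfolding a_def u_def by (rule chain5[OF adj_carrier[OF Pc] adj_carrier[OF Ttc] Sc Ttc Pc v])
    have Ev: "?E *\<^sub>v v = mat_adjoint ?P *\<^sub>v a'"
      unfolding a'_def u_def by (rule chain5[OF adj_carrier[OF Pc] adj_carrier[OF Tc] Sc Tc Pc v])
    have diff: "(?Xt - ?E) *\<^sub>v v = mat_adjoint ?P *\<^sub>v (a - a')"
      using minus_mult_distrib_mat_vec[OF Xtc Ec v] Xv Ev mult_minus_distrib_mat_vec[OF adj_carrier[OF Pc] ac ac'] by simp
    define z where "z = ?S *\<^sub>v (T *\<^sub>v u)"
    define y where "y = mat_adjoint T *\<^sub>v z"
    have zc: "z \<in> carrier_vec M" unfolding z_def using Sc Tc u by simp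
    have yc: "y \<in> carrier_vec M" unfolding y_def using adj_carrier[OF Tc] zc by (rule mult_mat_vec_carrier)
    have nz: "vec_norm2 z = vec_norm2 u" unfolding z_def using Sn TU(3)[OF u] Tc u by simp
    have ny: "vec_norm2 y \<le> vec_norm2 u" unfolding y_def using TU(4)[OF zc] nz by simp
    have Ty: "T *\<^sub>v y = z"
    proof -
      have "T *\<^sub>v y = (T * mat_adjoint T) *\<^sub>v z" unfolding y_def
        using assoc_mult_mat_vec[OF Tc adj_carrier[OF Tc] zc] by simp
      also have "\<dots> = z" using TU(2) zc by simp
      finally show ?thesis .
    qed
    have TtTty: "mat_adjoint Tt *\<^sub>v (Tt *\<^sub>v y) = y"
    proof -
      have "mat_adjoint Tt *\<^sub>v (Tt *\<^sub>v y) = (mat_adjoint Tt * Tt) *\<^sub>v y"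
        using assoc_mult_mat_vec[OF adj_carrier[OF Ttc] Ttc yc] by simp
      also have "\<dots> = y" using TtU(1) yc by simp
      finally show ?thesis .
    qed
    let ?w = "mat_adjoint Tt *\<^sub>v z"
    have wc: "?w \<in> carrier_vec M" using adj_carrier[OF Ttc] zc by (rule mult_mat_vec_carrier)
    have a'y: "a' = y" unfolding a'_def y_def z_def ..
    have Stu: "?S *\<^sub>v (Tt *\<^sub>v u) \<in> carrier_vec M" using Sc Ttc u by simp
    have b1: "vec_norm2 (a - ?w) \<le> \<epsilon> / 2 * vec_norm2 u"
    proof -
      have "a - ?w = mat_adjoint Tt *\<^sub>v (?S *\<^sub>v (Tt *\<^sub>v u) - z)"
        unfolding a_def using mult_minus_distrib_mat_vec[OF adj_carrier[OF Ttc] Stu zc] by simp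
      also have "?S *\<^sub>v (Tt *\<^sub>v u) - z = ?S *\<^sub>v (Tt *\<^sub>v u - T *\<^sub>v u)"
        unfolding z_def using mult_minus_distrib_mat_vec[OF Sc, of "Tt *\<^sub>v u" "T *\<^sub>v u"] Ttc Tc u by simp
      finally have e: "a - ?w = mat_adjoint Tt *\<^sub>v (?S *\<^sub>v (Tt *\<^sub>v u - T *\<^sub>v u))" .
      have dc: "Tt *\<^sub>v u - T *\<^sub>v u \<in> carrier_vec M" using Ttc Tc u by simp
      have sc: "?S *\<^sub>v (Tt *\<^sub>v u - T *\<^sub>v u) \<in> carrier_vec M" using Sc dc by simp
      have "vec_norm2 (a - ?w) \<le> vec_norm2 (?S *\<^sub>v (Tt *\<^sub>v u - T *\<^sub>v u))" unfolding e by (rule TtU(4)[OF sc])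
      also have "\<dots> = vec_norm2 (Tt *\<^sub>v u - T *\<^sub>v u)" by (rule Sn[OF dc])
      also have "\<dots> \<le> \<epsilon> / 2 * vec_norm2 u" by (rule Dn'[OF u])
      finally show ?thesis .
    qed
    have b2: "vec_norm2 (?w - a') \<le> \<epsilon> / 2 * vec_norm2 u"
    proof -
      have Tyc: "T *\<^sub>v y \<in> carrier_vec M" and Ttyc: "Tt *\<^sub>v y \<in> carrier_vec M" using Tc Ttc yc by auto
      have "?w - a' = mat_adjoint Tt *\<^sub>v (T *\<^sub>v y) - mat_adjoint Tt *\<^sub>v (Tt *\<^sub>v y)"
        unfolding a'y using Ty TtTty by simp
      also have "\<dots> = mat_adjoint Tt *\<^sub>v (T *\<^sub>v y - Tt *\<^sub>v y)"
        using mult_minus_distrib_mat_vec[OF adj_carrier[OF Ttc] Tyc Ttyc] by simp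
      finally have e: "?w - a' = mat_adjoint Tt *\<^sub>v (T *\<^sub>v y - Tt *\<^sub>v y)" .
      have dc: "T *\<^sub>v y - Tt *\<^sub>v y \<in> carrier_vec M" using Tyc Ttyc by simp
      have "vec_norm2 (?w - a') \<le> vec_norm2 (T *\<^sub>v y - Tt *\<^sub>v y)" unfolding e by (rule TtU(4)[OF dc])
      also have "\<dots> = vec_norm2 (Tt *\<^sub>v y - T *\<^sub>v y)" using Tyc Ttyc Tc Ttc by (intro norm2_minus_comm) simp
      also have "\<dots> \<le> \<epsilon> / 2 * vec_norm2 y" by (rule Dn'[OF yc])
      also have "\<dots> \<le> \<epsilon> / 2 * vec_norm2 u" using ny eps_nonneg by (intro mult_left_mono) auto
      finally show ?thesis .
    qed
    have "vec_norm2 ((?Xt - ?E) *\<^sub>v v) \<le> vec_norm2 (a - a')"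
      unfolding diff using ac ac' by (intro Padj) simp
    also have "\<dots> \<le> vec_norm2 (a - ?w) + vec_norm2 (?w - a')" by (rule vec_tri3[OF ac ac' wc])
    also have "\<dots> \<le> \<epsilon> / 2 * vec_norm2 u + \<epsilon> / 2 * vec_norm2 u" using b1 b2 by simp
    also have "\<dots> = \<epsilon> * vec_norm2 v" using nu by simp
    finally show "vec_norm2 ((?Xt - ?E) *\<^sub>v v) \<le> \<epsilon> * vec_norm2 v" .
  qed
qed


end
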